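(* Let $\mathcal{H}_S,\mathcal{H}_E$ be finite-dimensional Hilbert spaces with dimensions $d_S,d_E$, with orthonormal bases $\{|i\rangle_S\}_{i=1}^{d_S}$ and $\{|j\rangle_E\}_{j=1}^{d_E}$. Let $H_{SE}$ be a Hamiltonian on $\mathcal{H}_S\otimes\mathcal{H}_E$ with orthonormal eigenbasis $\{|E_k\rangle_{SE}\}_{k=1}^{d_Sd_E}$ and corresponding eigenvalues $E_k$, and let $U(t)=\exp(-iH_{SE}t)$. For a map $k\mapsto(\xi(k),\hat\xi(k))$ from $\{1,\ldots,d_Sd_E\}$ to $\{1,\ldots,d_S\}\times\{1,\ldots,d_E\}$, set $f_k=|\langle E_k|(|\xi(k)\rangle_S\otimes|\hat\xi(k)\rangle_E)|$. For $\phi\in\{1,\ldots,d_S\}$ define $\delta(\phi)=\max_{k\mapsto(\xi(k),\hat\xi(k))\ \text{injective}}\ \min\{f_k: \xi(k)=\phi\}$. Consider the initial system state $|\phi\rangle_S$ (the basis vector with index $\phi$) and assume $\delta(\phi)>\frac{1}{\sqrt2}$. Let $\tau_S(t)=\mathrm{tr}_E\left[U(t)\left(|\phi\rangle\langle\phi|_S\otimes\frac{\mathbb{I}_E}{d_E}\right)U(t)^\dagger\right]$. Then for all times $t$, $\left\|\tau_S(t)-|\phi\rangle\langle\phi|_S\right\|_1\leq 4\delta(\phi)\sqrt{1-\delta(\phi)^2}$.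
   Context: $\|X\|_1=\mathrm{tr}\sqrt{X^\dagger X}$ is the trace norm; $\mathrm{tr}_E$ is the partial trace over $E$. *)

theory Defs
  imports Complex_Main "Jordan_Normal_Form.Matrix"
begin

definition adj :: "complex mat \<Rightarrow> complex mat" where
  "adj A = mat (dim_col A) (dim_row A) (\<lambda>(i,j). cnj (A $$ (j,i)))"

definition cinner :: "complex vec \<Rightarrow> complex vec \<Rightarrow> complex" where
  "cinner u v = (\<Sum>i<dim_vec v. cnj (u $ i) * v $ i)"

(* computational basis vector |i> of a d-dimensional space (indices 0..d-1) *)
definition ket :: "nat \<Rightarrow> nat \<Rightarrow> complex vec" where
  "ket d i = unit_vec d i"

definition proj :: "complex vec \<Rightarrow> complex mat" where
  "proj v = mat (dim_vec v) (dim_vec v) (\<lambda>(i,j). v $ i * cnj (v $ j))"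

(* tensor (Kronecker) products, index (i,j) of H_S \<otimes> H_E is i * d_E + j *)
definition tensor_vec :: "complex vec \<Rightarrow> complex vec \<Rightarrow> complex vec" where
  "tensor_vec u v = vec (dim_vec u * dim_vec v) (\<lambda>i. u $ (i div dim_vec v) * v $ (i mod dim_vec v))"

definition tensor_mat :: "complex mat \<Rightarrow> complex mat \<Rightarrow> complex mat" where
  "tensor_mat A B = mat (dim_row A * dim_row B) (dim_col A * dim_col B)
     (\<lambda>(i,j). A $$ (i div dim_row B, j div dim_col B) * B $$ (i mod dim_row B, j mod dim_col B))"

definition ptrace_E :: "nat \<Rightarrow> nat \<Rightarrow> complex mat \<Rightarrow> complex mat" where
  "ptrace_E dS dE M = mat dS dS (\<lambda>(i,j). \<Sum>l<dE. M $$ (i * dE + l, j * dE + l))"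

definition mat_exp :: "complex mat \<Rightarrow> complex mat" where
  "mat_exp A = mat (dim_row A) (dim_col A) (\<lambda>(i,j). \<Sum>m. (A ^\<^sub>m m) $$ (i,j) / of_nat (fact m))"

definition psd :: "complex mat \<Rightarrow> bool" where
  "psd B \<longleftrightarrow> B \<in> carrier_mat (dim_row B) (dim_row B) \<and> adj B = B \<and>
     (\<forall>v \<in> carrier_vec (dim_row B). 0 \<le> Re (cinner v (B *\<^sub>v v)))"

definition psd_sqrt :: "complex mat \<Rightarrow> complex mat" where
  "psd_sqrt A = (THE B. dim_row B = dim_row A \<and> psd B \<and> B * B = A)"

definition mtrace :: "complex mat \<Rightarrow> complex" where
  "mtrace A = (\<Sum>i<dim_row A. A $$ (i,i))"

definition trace_norm :: "complex mat \<Rightarrow> real" where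
  "trace_norm X = Re (mtrace (psd_sqrt (adj X * X)))"

(* delta(phi): maximum over injective k \<mapsto> (xi k, xihat k) of min {f_k : xi k = phi},
   with f_k = |<E_k| (|xi k> \<otimes> |xihat k>)|; all indices are 0-based *)
definition delta :: "nat \<Rightarrow> nat \<Rightarrow> (nat \<Rightarrow> complex vec) \<Rightarrow> nat \<Rightarrow> real" where
  "delta dS dE Ev phi = Max {Min {cmod (cinner (Ev k) (tensor_vec (ket dS (fst (\<sigma> k))) (ket dE (snd (\<sigma> k)))))
                                 | k. k < dS * dE \<and> fst (\<sigma> k) = phi}
                           | \<sigma>. inj_on \<sigma> {..<dS * dE} \<and> \<sigma> ` {..<dS * dE} \<subseteq> {..<dS} \<times> {..<dE}}"

end

theory Submission
  imports Defs "Jordan_Normal_Form.Char_Poly" "HOL-Computational_Algebra.Fundamental_Theorem_Algebra"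
begin


lemma mve: "A \<in> carrier_mat n m \<Longrightarrow> v \<in> carrier_vec m \<Longrightarrow> i < n \<Longrightarrow>
  (A *\<^sub>v v) $ i = (\<Sum>j<m. A $$ (i,j) * v $ j)"
  by (auto simp: scalar_prod_def row_def atLeast0LessThan intro!: sum.cong)

lemma mme: "A \<in> carrier_mat n m \<Longrightarrow> B \<in> carrier_mat m p \<Longrightarrow> i < n \<Longrightarrow> j < p \<Longrightarrow>
  (A * B) $$ (i,j) = (\<Sum>k<m. A $$ (i,k) * B $$ (k,j))"
  by (auto simp: scalar_prod_def row_def col_def atLeast0LessThan intro!: sum.cong)

lemma adj_carrier[simp]: "A \<in> carrier_mat n m \<Longrightarrow> adj A \<in> carrier_mat m n"
  by (auto simp: adj_def)
lemma adj_dims[simp]: "dim_row (adj A) = dim_col A" "dim_col (adj A) = dim_row A"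
  by (auto simp: adj_def)
lemma adj_index[simp]: "i < dim_col A \<Longrightarrow> j < dim_row A \<Longrightarrow> adj A $$ (i,j) = cnj (A $$ (j,i))"
  by (auto simp: adj_def)
lemma adj_adj[simp]: "adj (adj A) = A"
  by (rule eq_matI, auto)
lemma adj_mult: assumes "A \<in> carrier_mat n m" "B \<in> carrier_mat m p" shows "adj (A * B) = adj B * adj A"
proof (rule eq_matI)
  fix i j assume ij: "i < dim_row (adj B * adj A)" "j < dim_col (adj B * adj A)"
  have i: "i < p" and j: "j < n" using ij assms by auto
  have d: "dim_row A = n" "dim_col A = m" "dim_row B = m" "dim_col B = p" using assms by auto
  show "adj (A * B) $$ (i, j) = (adj B * adj A) $$ (i, j)" using i j assms unfolding adj_def[of "A*B"]
    by (simp add: d mme[of A n m B p] mme[of "adj B" p m "adj A" n] mult.commute del: index_mult_mat(1))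
qed (use assms in auto)
lemma adj_one[simp]: "adj (1\<^sub>m n) = 1\<^sub>m n"
  by (rule eq_matI, auto)

lemma cinner_carrier: "v \<in> carrier_vec n \<Longrightarrow> cinner u v = (\<Sum>i<n. cnj (u $ i) * v $ i)"
  by (auto simp: cinner_def)
lemma cinner_add_right: "v \<in> carrier_vec n \<Longrightarrow> w \<in> carrier_vec n \<Longrightarrow> cinner u (v + w) = cinner u v + cinner u w"
  by (auto simp: cinner_def sum.distrib algebra_simps)
lemma cinner_add_left: "u \<in> carrier_vec n \<Longrightarrow> w \<in> carrier_vec n \<Longrightarrow> v \<in> carrier_vec n \<Longrightarrow> cinner (u + w) v = cinner u v + cinner w v"
  by (auto simp: cinner_def sum.distrib algebra_simps)
lemma cinner_minus_right: "v \<in> carrier_vec n \<Longrightarrow> w \<in> carrier_vec n \<Longrightarrow> cinner u (v - w) = cinner u v - cinner u w"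
  by (auto simp: cinner_def sum_subtractf algebra_simps)
lemma cinner_minus_left: "u \<in> carrier_vec n \<Longrightarrow> w \<in> carrier_vec n \<Longrightarrow> v \<in> carrier_vec n \<Longrightarrow> cinner (u - w) v = cinner u v - cinner w v"
  by (auto simp: cinner_def sum_subtractf algebra_simps)
lemma cinner_smult_right: "cinner u (c \<cdot>\<^sub>v v) = c * cinner u v"
  by (auto simp: cinner_def sum_distrib_left algebra_simps)
lemma cinner_smult_left: "v \<in> carrier_vec n \<Longrightarrow> u \<in> carrier_vec n \<Longrightarrow> cinner (c \<cdot>\<^sub>v u) v = cnj c * cinner u v"
  by (auto simp: cinner_def sum_distrib_left algebra_simps)
lemma cinner_swap: "v \<in> carrier_vec n \<Longrightarrow> u \<in> carrier_vec n \<Longrightarrow> cinner v u = cnj (cinner u v)"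
  by (auto simp: cinner_def algebra_simps)
lemma cinner_self: assumes "v \<in> carrier_vec n" shows "cinner v v = of_real (\<Sum>i<n. (cmod (v $ i))\<^sup>2)"
proof -
  have "\<And>z. cnj z * z = complex_of_real ((cmod z)\<^sup>2)" unfolding complex_norm_square by (rule mult.commute)
  thus ?thesis using assms by (simp add: cinner_def del: of_real_power)
qed
lemma cinner_self_eq0: assumes "v \<in> carrier_vec n" "cinner v v = 0" shows "v = 0\<^sub>v n"
proof -
  have "complex_of_real (\<Sum>i<n. (cmod (v $ i))\<^sup>2) = 0" using cinner_self[OF assms(1)] assms(2) by simp
  hence "(\<Sum>i<n. (cmod (v $ i))\<^sup>2) = 0" by (simp only: of_real_eq_0_iff)
  hence "\<forall>i\<in>{..<n}. (cmod (v $ i))\<^sup>2 = 0" by (subst (asm) sum_nonneg_eq_0_iff) auto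
  thus ?thesis using assms(1) by (intro eq_vecI) auto
qed
lemma cinner_self_Re: assumes "v \<in> carrier_vec n" shows "Re (cinner v v) = (\<Sum>i<n. (cmod (v $ i))\<^sup>2)"
  by (subst cinner_self[OF assms]) (simp only: Re_complex_of_real)

lemma sum_delta_r: "finite A \<Longrightarrow> (\<Sum>k\<in>A. f k * (if k = j then 1 else 0)) = (if j \<in> A then f j else (0::'a::semiring_1))"
  by (simp add: if_distrib[of "\<lambda>x. f _ * x"] cong: if_cong)
lemma sum_delta_l: "finite A \<Longrightarrow> (\<Sum>k\<in>A. (if k = j then 1 else 0) * f k) = (if j \<in> A then f j else (0::'a::semiring_1))"
  by (simp add: if_distrib[of "\<lambda>x. x * f _"] cong: if_cong)

lemma cinner_zero_right[simp]: "cinner u (0\<^sub>v n) = 0"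
  by (auto simp: cinner_def)

lemma cinner_mat: assumes "A \<in> carrier_mat n m" "u \<in> carrier_vec n" "v \<in> carrier_vec m"
  shows "cinner u (A *\<^sub>v v) = cinner (adj A *\<^sub>v u) v"
proof -
  have "cinner u (A *\<^sub>v v) = (\<Sum>i<n. \<Sum>j<m. cnj (u $ i) * A $$ (i,j) * v $ j)"
    using assms by (auto simp: cinner_carrier[of _ n] mve sum_distrib_left mult.assoc simp del: index_mult_mat_vec)
  also have "\<dots> = (\<Sum>j<m. \<Sum>i<n. cnj (u $ i) * A $$ (i,j) * v $ j)" by (rule sum.swap)
  also have "\<dots> = cinner (adj A *\<^sub>v u) v"
    using assms by (auto simp: cinner_carrier[of _ m] mve[of _ m n] sum_distrib_right sum_distrib_left mult.commute mult.left_commute simp del: index_mult_mat_vec intro!: sum.cong)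
  finally show ?thesis .
qed

lemma cinner_herm: assumes "A \<in> carrier_mat n n" "adj A = A" "u \<in> carrier_vec n" "v \<in> carrier_vec n"
  shows "cinner u (A *\<^sub>v v) = cinner (A *\<^sub>v u) v"
  using cinner_mat[OF assms(1,3,4)] assms(2) by simp

lemma cinner_unitary: assumes "W \<in> carrier_mat n n" "adj W * W = 1\<^sub>m n" "u \<in> carrier_vec n" "v \<in> carrier_vec n"
  shows "cinner (W *\<^sub>v u) (W *\<^sub>v v) = cinner u v"
proof -
  have "cinner (W *\<^sub>v u) (W *\<^sub>v v) = cinner (adj W *\<^sub>v (W *\<^sub>v u)) v"
    using assms by (intro cinner_mat) auto
  also have "adj W *\<^sub>v (W *\<^sub>v u) = (adj W * W) *\<^sub>v u" using assms by (intro assoc_mult_mat_vec[symmetric]) auto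
  finally show ?thesis using assms by simp
qed



lemma unit_index: "i < N \<Longrightarrow> unit_vec N j $ i = (if i = j then 1 else 0)"
  by (auto simp: unit_vec_def)

lemma mat_unit: fixes M :: "complex mat" shows "M \<in> carrier_mat n N \<Longrightarrow> j < N \<Longrightarrow> M *\<^sub>v unit_vec N j = col M j"
proof (rule eq_vecI)
  fix i assume "M \<in> carrier_mat n N" "j < N" "i < dim_vec (col M j)"
  thus "(M *\<^sub>v unit_vec N j) $ i = col M j $ i"
    using sum_delta_r[of "{0..<N}" "\<lambda>k. M $$ (i,k)" j]
    by (simp add: scalar_prod_def unit_vec_def row_def)
qed auto

lemma householder:
  assumes v: "v \<in> carrier_vec N" and v1: "cinner v v = 1" and N: "0 < N"
  shows "\<exists>W \<in> carrier_mat N N. adj W * W = 1\<^sub>m N \<and> W *\<^sub>v unit_vec N 0 = v"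
proof -
  define r where "r = cmod (v $ 0)"
  define \<alpha> where "\<alpha> = (if v $ 0 = 0 then 1 else v $ 0 / complex_of_real r)"
  have r0: "r \<ge> 0" unfolding r_def by simp
  have a1: "cnj \<alpha> * \<alpha> = 1"
  proof (cases "v $ 0 = 0")
    case False
    hence "r \<noteq> 0" unfolding r_def by simp
    hence "cnj \<alpha> * \<alpha> = (cnj (v$0) * v$0) / complex_of_real (r*r)" using False unfolding \<alpha>_def by simp
    also have "cnj (v$0) * v$0 = complex_of_real (r*r)" unfolding r_def
      by (metis complex_norm_square mult.commute power2_eq_square)
    finally show ?thesis using \<open>r \<noteq> 0\<close> by simp
  qed (simp add: \<alpha>_def)
  have a2: "\<alpha> * cnj (v $ 0) = complex_of_real r"
  proof (cases "v $ 0 = 0")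
    case False
    hence "r \<noteq> 0" unfolding r_def by simp
    have "\<alpha> * cnj (v $ 0) = (v$0 * cnj (v$0)) / complex_of_real r" using False unfolding \<alpha>_def by simp
    also have "v$0 * cnj (v$0) = complex_of_real (r*r)" unfolding r_def
      by (metis complex_norm_square power2_eq_square)
    finally show ?thesis using \<open>r \<noteq> 0\<close> by (simp add: power2_eq_square)
  qed (simp add: \<alpha>_def r_def)
  have a3: "v $ 0 = \<alpha> * complex_of_real r"
  proof (cases "v $ 0 = 0")
    case False
    hence "r \<noteq> 0" unfolding r_def by simp
    thus ?thesis using False unfolding \<alpha>_def by simp
  qed (simp add: \<alpha>_def r_def)
  obtain m where Nm: "N = Suc m" using N by (cases N) auto
  have nrm: "(\<Sum>k<N. (cmod (v$k))\<^sup>2) = 1" using cinner_self_Re[OF v] v1 by simp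
  have nrm2: "r\<^sup>2 + (\<Sum>k<m. (cmod (v $ Suc k))\<^sup>2) = 1"
    using nrm unfolding Nm sum.lessThan_Suc_shift r_def by simp
  have sge: "(\<Sum>k<m. (cmod (v $ Suc k))\<^sup>2) \<ge> 0" by (rule sum_nonneg) auto
  have r1: "r \<le> 1" using nrm2 sge r0 by (smt (verit) power2_eq_square mult_le_cancel_left1) 
  show ?thesis
  proof (cases "r = 1")
    case True
    hence "(\<Sum>k<m. (cmod (v $ Suc k))\<^sup>2) = 0" using nrm2 by simp
    hence z: "\<forall>k<m. v $ Suc k = 0" by (subst (asm) sum_nonneg_eq_0_iff) auto
    have vv: "v = \<alpha> \<cdot>\<^sub>v unit_vec N 0"
    proof (rule eq_vecI)
      fix i assume "i < dim_vec (\<alpha> \<cdot>\<^sub>v unit_vec N 0)"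
      hence i: "i < N" by simp
      show "v $ i = (\<alpha> \<cdot>\<^sub>v unit_vec N 0) $ i"
      proof (cases i)
        case 0 thus ?thesis using a3 True i by simp
      next
        case (Suc k) thus ?thesis using z i Nm by simp
      qed
    qed (use v in simp)
    define W where "W = mat N N (\<lambda>(i,j). if i = j then \<alpha> else 0)"
    have W: "W \<in> carrier_mat N N" unfolding W_def by simp
    have "adj W * W = 1\<^sub>m N"
    proof (rule eq_matI)
      fix i j assume "i < dim_row (1\<^sub>m N)" "j < dim_col (1\<^sub>m N)"
      hence ij: "i < N" "j < N" by auto
      have "(adj W * W) $$ (i,j) = (\<Sum>k<N. (if k = i then cnj \<alpha> else 0) * (if k = j then \<alpha> else 0))"
        using ij W by (subst mme[of _ N N _ N]) (auto simp: W_def intro!: sum.cong)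
      also have "\<dots> = (\<Sum>k<N. if k = i then (if i = j then cnj \<alpha> * \<alpha> else 0) else 0)"
        by (rule sum.cong) auto
      also have "\<dots> = 1\<^sub>m N $$ (i,j)" using ij a1 by simp
      finally show "(adj W * W) $$ (i,j) = 1\<^sub>m N $$ (i,j)" .
    qed (use W in auto)
    moreover have "W *\<^sub>v unit_vec N 0 = v"
      by (subst mat_unit[OF W N], rule eq_vecI, auto simp: W_def vv)
    ultimately show ?thesis using W by blast
  next
    case False
    hence r1': "r < 1" using r1 by simp
    define u where "u = v - \<alpha> \<cdot>\<^sub>v unit_vec N 0"
    have u: "u \<in> carrier_vec N" unfolding u_def using v by simp
    have u0: "u $ 0 = \<alpha> * complex_of_real (r - 1)" unfolding u_def using v N a3
      by (simp add: algebra_simps)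
    have uS: "\<And>k. k < m \<Longrightarrow> u $ Suc k = v $ Suc k" unfolding u_def using v Nm by simp
    define c where "c = 2 - 2 * r"
    have c0: "c > 0" unfolding c_def using r1' by simp
    have cma: "cmod \<alpha> = 1"
      using a1 by (metis complex_mod_mult_cnj mult.commute norm_one power2_eq_square abs_norm_cancel norm_ge_zero power2_eq_1_iff real_sqrt_abs real_sqrt_one)
    have uu: "(\<Sum>k<N. (cmod (u$k))\<^sup>2) = c"
    proof -
      have "(\<Sum>k<N. (cmod (u$k))\<^sup>2) = (cmod (u$0))\<^sup>2 + (\<Sum>k<m. (cmod (v $ Suc k))\<^sup>2)"
        unfolding Nm sum.lessThan_Suc_shift using uS by simp
      also have "(cmod (u$0))\<^sup>2 = (1 - r)\<^sup>2" unfolding u0 norm_mult cma norm_of_real using r1' by (simp add: power2_eq_square)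
      finally show ?thesis using nrm2 unfolding c_def by (simp add: power2_eq_square algebra_simps)
    qed
    have uuc: "(\<Sum>k<N. cnj (u$k) * u$k) = complex_of_real c"
      using cinner_self[OF u] uu u by (simp add: cinner_def)
    define s where "s = complex_of_real (2 / c)"
    have sc: "s * complex_of_real c = 2" unfolding s_def using c0 by (simp add: field_simps)
    have cs: "cnj s = s" unfolding s_def by simp
    define W where "W = mat N N (\<lambda>(i,j). \<alpha> * ((if i = j then 1 else 0) - s * u$i * cnj (u$j)))"
    have W: "W \<in> carrier_mat N N" unfolding W_def by simp
    have "adj W * W = 1\<^sub>m N"
    proof (rule eq_matI)
      fix i j assume "i < dim_row (1\<^sub>m N)" "j < dim_col (1\<^sub>m N)"
      hence ij: "i < N" "j < N" by auto
      have "(adj W * W) $$ (i,j) = (\<Sum>k<N. cnj (W $$ (k,i)) * W $$ (k,j))"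
        using ij W by (subst mme[of _ N N _ N]) (auto intro!: sum.cong)
      also have "\<dots> = (\<Sum>k<N. (if k = i then (if i = j then 1 else 0) else 0)
           - s * (if k = i then u$k * cnj (u$j) else 0) - s * (if k = j then cnj (u$k) * u$i else 0)
           + (s*s*(u$i*cnj(u$j))) * (cnj (u$k) * u$k))"
      proof (rule sum.cong[OF refl])
        fix k assume "k \<in> {..<N}"
        hence k: "k < N" by simp
        have "cnj (W $$ (k,i)) * W $$ (k,j) = (cnj \<alpha> * \<alpha>) * (((if k = i then 1 else 0) - s * cnj (u$k) * u$i)
           * ((if k = j then 1 else 0) - s * u$k * cnj (u$j)))"
          using k ij cs unfolding W_def by simp
        also have "\<dots> = ((if k = i then 1 else 0) - s * cnj (u$k) * u$i)
           * ((if k = j then 1 else 0) - s * u$k * cnj (u$j))" using a1 by simp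
        also have "\<dots> = (if k = i then (if i = j then 1 else 0) else 0)
           - s * (if k = i then u$k * cnj (u$j) else 0) - s * (if k = j then cnj (u$k) * u$i else 0)
           + (s*s*(u$i*cnj(u$j))) * (cnj (u$k) * u$k)"
          by (auto simp: algebra_simps)
        finally show "cnj (W $$ (k,i)) * W $$ (k,j) = \<dots>" .
      qed
      also have "\<dots> = (if i = j then 1 else 0) - s * (u$i * cnj (u$j)) - s * (cnj (u$j) * u$i)
           + (s*s*(u$i*cnj(u$j))) * complex_of_real c"
        using ij by (simp add: sum.distrib sum_subtractf sum_distrib_left[symmetric] uuc)
      also have "\<dots> = (if i = j then 1 else 0)"
        using sc by (simp add: algebra_simps)
      finally show "(adj W * W) $$ (i,j) = 1\<^sub>m N $$ (i,j)" using ij by simp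
    qed (use W in auto)
    moreover have "W *\<^sub>v unit_vec N 0 = v"
    proof (subst mat_unit[OF W N], rule eq_vecI)
      fix i assume "i < dim_vec v"
      hence i: "i < N" using v by simp
      have "col W 0 $ i = \<alpha> * (if i = 0 then 1 else 0) - s * u$i * (\<alpha> * cnj (u$0))"
        using i N unfolding W_def by (simp add: algebra_simps)
      also have "\<alpha> * cnj (u$0) = complex_of_real (r - 1)"
        unfolding u0 using a1 by (simp add: algebra_simps)
      also have "s * u$i * complex_of_real (r - 1) = - u$i"
      proof -
        have "s * complex_of_real (r - 1) = -1" unfolding s_def c_def using r1' by (simp add: field_simps)
        thus ?thesis by (metis mult.commute mult.left_commute mult_minus1_right)
      qed
      also have "\<alpha> * (if i = 0 then 1 else 0) - - u$i = v $ i"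
        using i v unfolding u_def by simp
      finally show "col W 0 $ i = v $ i" .
    qed (use v W in auto)
    ultimately show ?thesis using W by blast
  qed
qed



lemma eig_exists: assumes A: "A \<in> carrier_mat N N" and N: "0 < N"
  shows "\<exists>v lam. v \<in> carrier_vec N \<and> cinner v v = 1 \<and> A *\<^sub>v v = lam \<cdot>\<^sub>v v"
proof -
  have "degree (char_poly A) = N" using degree_monic_char_poly[OF A] by simp
  hence "\<not> constant (poly (char_poly A))" using N by (subst constant_degree) simp
  then obtain z where "poly (char_poly A) z = 0" using fundamental_theorem_of_algebra by blast
  hence "eigenvalue A z" using eigenvalue_root_char_poly[OF A] by simp
  then obtain w where w: "eigenvector A w z" unfolding eigenvalue_def by blast
  hence w1: "w \<in> carrier_vec N" and w0: "w \<noteq> 0\<^sub>v N" and wz: "A *\<^sub>v w = z \<cdot>\<^sub>v w"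
    using A unfolding eigenvector_def by auto
  define t where "t = Re (cinner w w)"
  have tw: "cinner w w = complex_of_real t"
    unfolding t_def using cinner_self[OF w1] by simp
  have t0: "t \<noteq> 0" using cinner_self_eq0[OF w1] w0 tw by auto
  have tge: "t \<ge> 0" unfolding t_def cinner_self_Re[OF w1] by (rule sum_nonneg) auto
  define v where "v = complex_of_real (1 / sqrt t) \<cdot>\<^sub>v w"
  have v: "v \<in> carrier_vec N" unfolding v_def using w1 by simp
  have "cinner v v = complex_of_real (1 / sqrt t) * complex_of_real (1 / sqrt t) * complex_of_real t"
    unfolding v_def cinner_smult_right cinner_smult_left[OF smult_carrier_vec[THEN iffD2, OF w1] w1]
      cinner_smult_left[OF w1 w1] tw by simp
  also have "\<dots> = 1" using t0 tge by (simp flip: of_real_mult)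
  finally have v1: "cinner v v = 1" .
  have "A *\<^sub>v v = z \<cdot>\<^sub>v v" unfolding v_def using mult_mat_vec[OF A w1] wz by (simp add: smult_smult_assoc mult.commute)
  thus ?thesis using v v1 by blast
qed

lemma spectral:
  assumes "A \<in> carrier_mat n n" "adj A = A"
  shows "\<exists>u d. (\<forall>i<n. u i \<in> carrier_vec n) \<and> (\<forall>i<n. \<forall>j<n. cinner (u i) (u j) = (if i = j then 1 else 0))
     \<and> (\<forall>i<n. A *\<^sub>v u i = complex_of_real (d i) \<cdot>\<^sub>v u i)"
  using assms
proof (induction n arbitrary: A)
  case 0 then show ?case by auto
next
  case (Suc m A)
  let ?N = "Suc m"
  let ?e = "unit_vec ?N 0 :: complex vec"
  have A: "A \<in> carrier_mat ?N ?N" and hA: "adj A = A" using Suc.prems by auto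
  obtain v lam where v: "v \<in> carrier_vec ?N" and v1: "cinner v v = 1" and ev: "A *\<^sub>v v = lam \<cdot>\<^sub>v v"
    using eig_exists[OF A] by auto
  obtain W where W: "W \<in> carrier_mat ?N ?N" and WW: "adj W * W = 1\<^sub>m ?N" and We: "W *\<^sub>v ?e = v"
    using householder[OF v v1] by auto
  have aW: "adj W \<in> carrier_mat ?N ?N" using W by simp
  have WW2: "W * adj W = 1\<^sub>m ?N" using mat_mult_left_right_inverse[OF aW W WW] .
  define A' where "A' = adj W * A * W"
  have A': "A' \<in> carrier_mat ?N ?N" unfolding A'_def using W A aW by (meson mult_carrier_mat)
  have hA': "adj A' = A'" unfolding A'_def
    using adj_mult[OF mult_carrier_mat[OF aW A] W] adj_mult[OF aW A] hA W A
    by (simp add: assoc_mult_mat[OF aW A W])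
  have AW: "A * W = W * A'"
  proof -
    have "W * A' = (W * adj W) * (A * W)" unfolding A'_def using W A aW
      by (simp add: assoc_mult_mat[OF aW A W] assoc_mult_mat[of W ?N ?N "adj W" ?N "A * W" ?N])
    thus ?thesis using WW2 A W by simp
  qed
  have col0: "A' *\<^sub>v ?e = lam \<cdot>\<^sub>v ?e"
  proof -
    have e: "?e \<in> carrier_vec ?N" by simp
    have "A' *\<^sub>v ?e = adj W *\<^sub>v (A *\<^sub>v (W *\<^sub>v ?e))" unfolding A'_def 
      by (simp only: assoc_mult_mat[OF aW A W] assoc_mult_mat_vec[OF aW mult_carrier_mat[OF A W] e] assoc_mult_mat_vec[OF A W e])
    also have "\<dots> = lam \<cdot>\<^sub>v (adj W *\<^sub>v (W *\<^sub>v ?e))" unfolding We ev using mult_mat_vec[OF aW v] We by simp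
    also have "adj W *\<^sub>v (W *\<^sub>v ?e) = ?e" using WW W
      by (simp flip: assoc_mult_mat_vec[OF aW W e])
    finally show ?thesis .
  qed
  have Ai0: "\<And>i. i < ?N \<Longrightarrow> A' $$ (i,0) = (if i = 0 then lam else 0)"
  proof -
    fix i assume i: "i < ?N"
    have "(A' *\<^sub>v ?e) $ i = A' $$ (i,0)" using mat_unit[OF A'] i A' by simp
    thus "A' $$ (i,0) = (if i = 0 then lam else 0)" using col0 i by (cases "i = 0") auto
  qed
  have lreal: "cnj lam = lam"
  proof -
    have "A' $$ (0,0) = adj A' $$ (0,0)" using hA' by simp
    thus ?thesis using A' Ai0[of 0] by simp
  qed
  have A0j: "\<And>j. j < ?N \<Longrightarrow> A' $$ (0,j) = (if j = 0 then lam else 0)"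
  proof -
    fix j assume j: "j < ?N"
    have "A' $$ (0,j) = adj A' $$ (0,j)" using hA' by simp
    also have "\<dots> = cnj (A' $$ (j,0))" using A' j by simp
    finally show "A' $$ (0,j) = (if j = 0 then lam else 0)" using Ai0[OF j] lreal by simp
  qed
  define A3 where "A3 = mat m m (\<lambda>(i,j). A' $$ (Suc i, Suc j))"
  have A3: "A3 \<in> carrier_mat m m" unfolding A3_def by simp
  have hA3: "adj A3 = A3"
  proof (rule eq_matI)
    fix i j assume "i < dim_row A3" "j < dim_col A3"
    hence ij: "i < m" "j < m" using A3 by auto
    have "adj A3 $$ (i,j) = cnj (A' $$ (Suc j, Suc i))" using ij unfolding A3_def by simp
    also have "\<dots> = adj A' $$ (Suc i, Suc j)" using ij A' by simp
    finally show "adj A3 $$ (i,j) = A3 $$ (i,j)" using hA' ij unfolding A3_def by simp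
  qed (use A3 in auto)
  obtain u' d' where u'c: "\<forall>i<m. u' i \<in> carrier_vec m"
    and u'o: "\<forall>i<m. \<forall>j<m. cinner (u' i) (u' j) = (if i = j then 1 else 0)"
    and u'e: "\<forall>i<m. A3 *\<^sub>v u' i = complex_of_real (d' i) \<cdot>\<^sub>v u' i"
    using Suc.IH[OF A3 hA3] by blast
  define L where "L x = vec ?N (\<lambda>i. if i = 0 then 0 else x $ (i - 1))" for x :: "complex vec"
  have Lc: "\<And>x. L x \<in> carrier_vec ?N" unfolding L_def by simp
  have LL: "\<And>x y. x \<in> carrier_vec m \<Longrightarrow> y \<in> carrier_vec m \<Longrightarrow> cinner (L x) (L y) = cinner x y"
    unfolding L_def cinner_def by (simp del: sum.lessThan_Suc add: sum.lessThan_Suc_shift)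
  have eL: "\<And>x. cinner ?e (L x) = 0"
    unfolding L_def cinner_def by (simp del: sum.lessThan_Suc add: sum.lessThan_Suc_shift)
  have LS: "\<And>c x. x \<in> carrier_vec m \<Longrightarrow> L (c \<cdot>\<^sub>v x) = c \<cdot>\<^sub>v L x" unfolding L_def by (rule eq_vecI) auto
  have AL: "\<And>x. x \<in> carrier_vec m \<Longrightarrow> A' *\<^sub>v L x = L (A3 *\<^sub>v x)"
  proof -
    fix x :: "complex vec" assume x: "x \<in> carrier_vec m"
    show "A' *\<^sub>v L x = L (A3 *\<^sub>v x)"
    proof (rule eq_vecI)
      fix i assume "i < dim_vec (L (A3 *\<^sub>v x))"
      hence i: "i < ?N" unfolding L_def by simp
      have "(A' *\<^sub>v L x) $ i = (\<Sum>j<?N. A' $$ (i,j) * L x $ j)" using mve[OF A' Lc i] .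
      also have "\<dots> = (\<Sum>j<m. A' $$ (i,Suc j) * x $ j)"
        by (simp del: sum.lessThan_Suc add: sum.lessThan_Suc_shift L_def)
      also have "\<dots> = L (A3 *\<^sub>v x) $ i"
      proof (cases i)
        case 0 thus ?thesis using A0j by (simp add: L_def)
      next
        case (Suc k)
        hence k: "k < m" using i by simp
        show ?thesis using Suc k mve[OF A3 x k] unfolding L_def A3_def by simp
      qed
      finally show "(A' *\<^sub>v L x) $ i = L (A3 *\<^sub>v x) $ i" .
    qed (use A' in \<open>simp add: L_def\<close>)
  qed
  define u where "u i = (if i = 0 then v else W *\<^sub>v L (u' (i - 1)))" for i
  define d where "d i = (if i = 0 then Re lam else d' (i - 1))" for i
  have e: "?e \<in> carrier_vec ?N" by simp
  have vWL: "\<And>x. cinner v (W *\<^sub>v L x) = 0"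
    using cinner_unitary[OF W WW e Lc] eL We by simp
  show ?case
  proof (intro exI[of _ u] exI[of _ d] conjI allI impI)
    fix i assume i: "i < ?N"
    show "u i \<in> carrier_vec ?N" unfolding u_def using v W Lc by simp
  next
    fix i j assume i: "i < ?N" and j: "j < ?N"
    show "cinner (u i) (u j) = (if i = j then 1 else 0)"
    proof (cases "i = 0"; cases "j = 0")
      assume "i = 0" "j = 0" thus ?thesis using v1 unfolding u_def by simp
    next
      assume "i = 0" "j \<noteq> 0" thus ?thesis using vWL unfolding u_def by simp
    next
      assume "i \<noteq> 0" "j = 0"
      thus ?thesis using vWL cinner_swap[OF v, of "W *\<^sub>v L (u' (i - 1))"] W Lc unfolding u_def by simp
    next
      assume "i \<noteq> 0" "j \<noteq> 0"
      thus ?thesis using cinner_unitary[OF W WW Lc Lc] LL u'c u'o i j unfolding u_def by auto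
    qed
  next
    fix i assume i: "i < ?N"
    show "A *\<^sub>v u i = complex_of_real (d i) \<cdot>\<^sub>v u i"
    proof (cases "i = 0")
      case True
      have "Im lam = 0" using arg_cong[OF lreal, of Im] by simp
      hence "complex_of_real (Re lam) = lam" by (simp add: complex_eq_iff)
      thus ?thesis using True ev unfolding u_def d_def by simp
    next
      case False
      define k where "k = i - 1"
      have k: "k < m" using i False unfolding k_def by simp
      have "A *\<^sub>v (W *\<^sub>v L (u' k)) = W *\<^sub>v (A' *\<^sub>v L (u' k))"
        using assoc_mult_mat_vec[OF A W Lc, symmetric] assoc_mult_mat_vec[OF W A' Lc] AW by simp
      also have "A' *\<^sub>v L (u' k) = complex_of_real (d' k) \<cdot>\<^sub>v L (u' k)"
        using AL u'c u'e k LS by simp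
      also have "W *\<^sub>v (complex_of_real (d' k) \<cdot>\<^sub>v L (u' k)) = complex_of_real (d' k) \<cdot>\<^sub>v (W *\<^sub>v L (u' k))"
        using mult_mat_vec[OF W Lc] .
      finally show ?thesis using False unfolding u_def d_def k_def by simp
    qed
  qed
qed



definition onb :: "nat \<Rightarrow> (nat \<Rightarrow> complex vec) \<Rightarrow> bool" where
  "onb n u \<longleftrightarrow> (\<forall>i<n. u i \<in> carrier_vec n) \<and> (\<forall>i<n. \<forall>j<n. cinner (u i) (u j) = (if i = j then 1 else 0))"

definition specmat :: "nat \<Rightarrow> (nat \<Rightarrow> complex vec) \<Rightarrow> (nat \<Rightarrow> real) \<Rightarrow> complex mat" where
  "specmat n u f = mat n n (\<lambda>(a,b). \<Sum>i<n. complex_of_real (f i) * (u i $ a * cnj (u i $ b)))"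

lemma onb_complete: assumes "onb n u" "a < n" "b < n"
  shows "(\<Sum>i<n. u i $ a * cnj (u i $ b)) = (if a = b then 1 else 0)"
proof -
  define U where "U = mat n n (\<lambda>(a,i). u i $ a)"
  have U: "U \<in> carrier_mat n n" unfolding U_def by simp
  have aU: "adj U \<in> carrier_mat n n" using U by simp
  have "adj U * U = 1\<^sub>m n"
  proof (rule eq_matI)
    fix i j assume "i < dim_row (1\<^sub>m n)" "j < dim_col (1\<^sub>m n)"
    hence ij: "i < n" "j < n" by auto
    have "(adj U * U) $$ (i,j) = (\<Sum>k<n. cnj (u i $ k) * u j $ k)"
      using ij by (subst mme[OF aU U]) (auto simp: U_def)
    also have "\<dots> = cinner (u i) (u j)" using assms(1) ij unfolding onb_def by (intro cinner_carrier[symmetric]) auto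
    also have "\<dots> = 1\<^sub>m n $$ (i,j)" using assms(1) ij unfolding onb_def by simp
    finally show "(adj U * U) $$ (i,j) = 1\<^sub>m n $$ (i,j)" .
  qed (use U in auto)
  hence "U * adj U = 1\<^sub>m n" using mat_mult_left_right_inverse[OF aU U] by simp
  hence "(U * adj U) $$ (a,b) = (if a = b then 1 else 0)" using assms by simp
  moreover have "(U * adj U) $$ (a,b) = (\<Sum>i<n. u i $ a * cnj (u i $ b))"
    using assms by (subst mme[OF U aU]) (auto simp: U_def)
  ultimately show ?thesis by simp
qed

lemma sum_swap3: "(\<Sum>a\<in>A. \<Sum>b\<in>B. \<Sum>i\<in>C. T a b i) = (\<Sum>i\<in>C. \<Sum>a\<in>A. \<Sum>b\<in>B. T a b i)"
proof -
  have "(\<Sum>a\<in>A. \<Sum>b\<in>B. \<Sum>i\<in>C. T a b i) = (\<Sum>a\<in>A. \<Sum>i\<in>C. \<Sum>b\<in>B. T a b i)"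
    by (rule sum.cong[OF refl], rule sum.swap)
  also have "\<dots> = (\<Sum>i\<in>C. \<Sum>a\<in>A. \<Sum>b\<in>B. T a b i)" by (rule sum.swap)
  finally show ?thesis .
qed

lemma specmat_carrier[simp]: "specmat n u f \<in> carrier_mat n n"
  by (simp add: specmat_def)

lemma specmat_eigen: assumes "onb n u" "j < n"
  shows "specmat n u f *\<^sub>v u j = complex_of_real (f j) \<cdot>\<^sub>v u j"
proof (rule eq_vecI)
  have uj: "u j \<in> carrier_vec n" using assms unfolding onb_def by simp
  fix a assume "a < dim_vec (complex_of_real (f j) \<cdot>\<^sub>v u j)"
  hence a: "a < n" using uj by simp
  have "(specmat n u f *\<^sub>v u j) $ a = (\<Sum>b<n. (\<Sum>i<n. complex_of_real (f i) * (u i $ a * cnj (u i $ b))) * u j $ b)"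
    using mve[OF specmat_carrier uj a] a by (simp add: specmat_def)
  also have "\<dots> = (\<Sum>b<n. \<Sum>i<n. complex_of_real (f i) * u i $ a * (cnj (u i $ b) * u j $ b))"
    by (simp add: sum_distrib_right mult.assoc)
  also have "\<dots> = (\<Sum>i<n. \<Sum>b<n. complex_of_real (f i) * u i $ a * (cnj (u i $ b) * u j $ b))"
    by (rule sum.swap)
  also have "\<dots> = (\<Sum>i<n. complex_of_real (f i) * u i $ a * (\<Sum>b<n. cnj (u i $ b) * u j $ b))"
    by (simp add: sum_distrib_left)
  also have "\<dots> = (\<Sum>i<n. complex_of_real (f i) * u i $ a * (if i = j then 1 else 0))"
    using assms unfolding onb_def by (intro sum.cong) (auto simp: cinner_carrier[symmetric])
  also have "\<dots> = complex_of_real (f j) * u j $ a" using assms(2) by (simp add: sum_delta_r)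
  finally show "(specmat n u f *\<^sub>v u j) $ a = (complex_of_real (f j) \<cdot>\<^sub>v u j) $ a" using a uj by simp
qed (use assms in \<open>auto simp: onb_def specmat_def\<close>)

lemma spec_expand: assumes "onb n u" "M \<in> carrier_mat n n"
  and "\<forall>i<n. M *\<^sub>v u i = complex_of_real (f i) \<cdot>\<^sub>v u i"
  shows "M = specmat n u f"
proof (rule eq_matI)
  fix a b assume "a < dim_row (specmat n u f)" "b < dim_col (specmat n u f)"
  hence ab: "a < n" "b < n" by (auto simp: specmat_def)
  have uc: "\<And>i. i < n \<Longrightarrow> u i \<in> carrier_vec n" using assms unfolding onb_def by simp
  have ud: "\<And>i. i < n \<Longrightarrow> dim_vec (u i) = n" using uc by auto
  have "M $$ (a,b) = (\<Sum>c<n. M $$ (a,c) * (if c = b then 1 else 0))" using ab by (simp add: sum_delta_r)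
  also have "\<dots> = (\<Sum>c<n. M $$ (a,c) * (\<Sum>i<n. u i $ c * cnj (u i $ b)))"
    using onb_complete[OF assms(1) _ ab(2)] by simp
  also have "\<dots> = (\<Sum>c<n. \<Sum>i<n. M $$ (a,c) * u i $ c * cnj (u i $ b))"
    by (simp add: sum_distrib_left mult.assoc)
  also have "\<dots> = (\<Sum>i<n. \<Sum>c<n. M $$ (a,c) * u i $ c * cnj (u i $ b))"
    by (rule sum.swap)
  also have "\<dots> = (\<Sum>i<n. (\<Sum>c<n. M $$ (a,c) * u i $ c) * cnj (u i $ b))"
    by (simp add: sum_distrib_right)
  also have "\<dots> = (\<Sum>i<n. (M *\<^sub>v u i) $ a * cnj (u i $ b))"
    using mve[OF assms(2) uc ab(1)] by simp
  also have "\<dots> = specmat n u f $$ (a,b)"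
    using assms(3) ud ab by (auto simp: specmat_def mult.assoc intro!: sum.cong)
  finally show "M $$ (a,b) = specmat n u f $$ (a,b)" .
qed (use assms in \<open>auto simp: specmat_def\<close>)

lemma specmat_mult: assumes "onb n u"
  shows "specmat n u f * specmat n u g = specmat n u (\<lambda>i. f i * g i)"
proof (rule spec_expand[OF assms])
  show "specmat n u f * specmat n u g \<in> carrier_mat n n" by (rule mult_carrier_mat[OF specmat_carrier specmat_carrier])
  show "\<forall>i<n. specmat n u f * specmat n u g *\<^sub>v u i = complex_of_real (f i * g i) \<cdot>\<^sub>v u i"
  proof (intro allI impI)
    fix i assume i: "i < n"
    have ui: "u i \<in> carrier_vec n" using assms i unfolding onb_def by simp
    have "specmat n u f * specmat n u g *\<^sub>v u i = specmat n u f *\<^sub>v (specmat n u g *\<^sub>v u i)"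
      by (rule assoc_mult_mat_vec[OF specmat_carrier specmat_carrier ui])
    also have "\<dots> = complex_of_real (f i * g i) \<cdot>\<^sub>v u i"
      using specmat_eigen[OF assms i] mult_mat_vec[OF specmat_carrier ui] by (simp add: smult_smult_assoc mult.commute)
    finally show "specmat n u f * specmat n u g *\<^sub>v u i = complex_of_real (f i * g i) \<cdot>\<^sub>v u i" .
  qed
qed

lemma specmat_adj: "adj (specmat n u f) = specmat n u f"
  by (rule eq_matI) (auto simp: specmat_def mult.commute)

lemma specmat_quad: assumes "onb n u" "v \<in> carrier_vec n"
  shows "cinner v (specmat n u f *\<^sub>v v) = (\<Sum>i<n. complex_of_real (f i) * (cnj (cinner (u i) v) * cinner (u i) v))"
proof -
  have uc: "\<And>i. i < n \<Longrightarrow> u i \<in> carrier_vec n" using assms unfolding onb_def by simp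
  have e: "\<And>a. a < n \<Longrightarrow> (specmat n u f *\<^sub>v v) $ a = (\<Sum>b<n. (\<Sum>i<n. complex_of_real (f i) * (u i $ a * cnj (u i $ b))) * v $ b)"
    using mve[OF specmat_carrier assms(2)] by (simp add: specmat_def del: index_mult_mat_vec)
  have "cinner v (specmat n u f *\<^sub>v v) = (\<Sum>a<n. cnj (v $ a) * (specmat n u f *\<^sub>v v) $ a)"
    by (rule cinner_carrier, rule mult_mat_vec_carrier[OF specmat_carrier assms(2)])
  also have "\<dots> = (\<Sum>a<n. cnj (v $ a) * (\<Sum>b<n. (\<Sum>i<n. complex_of_real (f i) * (u i $ a * cnj (u i $ b))) * v $ b))"
    using e by simp
  also have "\<dots> = (\<Sum>a<n. \<Sum>b<n. \<Sum>i<n. complex_of_real (f i) * ((cnj (v $ a) * u i $ a) * (cnj (u i $ b) * v $ b)))"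
    by (simp add: sum_distrib_left sum_distrib_right mult.assoc mult.left_commute)
  also have "\<dots> = (\<Sum>i<n. \<Sum>a<n. \<Sum>b<n. complex_of_real (f i) * ((cnj (v $ a) * u i $ a) * (cnj (u i $ b) * v $ b)))"
    by (rule sum_swap3)
  also have "\<dots> = (\<Sum>i<n. complex_of_real (f i) * ((\<Sum>a<n. cnj (v $ a) * u i $ a) * (\<Sum>b<n. cnj (u i $ b) * v $ b)))"
    unfolding sum_product by (simp only: sum_distrib_left)
  also have "\<dots> = (\<Sum>i<n. complex_of_real (f i) * (cnj (cinner (u i) v) * cinner (u i) v))"
    using uc assms(2) by (intro sum.cong) (auto simp: cinner_carrier mult.commute)
  finally show ?thesis .
qed



lemma cinner_expand_Re: assumes "x \<in> carrier_vec n" "z \<in> carrier_vec n"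
  shows "Re (cinner (x + complex_of_real r \<cdot>\<^sub>v z) (x + complex_of_real r \<cdot>\<^sub>v z))
    = Re (cinner x x) + 2 * r * Re (cinner z x) + r * r * Re (cinner z z)"
proof -
  have rz: "complex_of_real r \<cdot>\<^sub>v z \<in> carrier_vec n" using assms by simp
  have "cinner (x + complex_of_real r \<cdot>\<^sub>v z) (x + complex_of_real r \<cdot>\<^sub>v z)
     = cinner x x + complex_of_real r * cinner x z + complex_of_real r * cinner z x + complex_of_real r * complex_of_real r * cinner z z"
    using assms rz
    by (simp add: cinner_add_left[of _ n] cinner_add_right[of _ n] cinner_smult_right cinner_smult_left[of _ n] algebra_simps)
  moreover have "Re (cinner x z) = Re (cinner z x)" using cinner_swap[OF assms(2,1)] by simp
  ultimately show ?thesis by simp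
qed

lemma psd_Re: "psd B \<Longrightarrow> v \<in> carrier_vec (dim_row B) \<Longrightarrow> 0 \<le> Re (cinner v (B *\<^sub>v v))"
  unfolding psd_def by auto

lemma adj_minus: "A \<in> carrier_mat n m \<Longrightarrow> B \<in> carrier_mat n m \<Longrightarrow> adj (A - B) = adj A - adj B"
  by (rule eq_matI) auto

lemma specmat_quad_Re: assumes u: "onb n u" and f: "\<forall>i. f i \<ge> 0" and y: "y \<in> carrier_vec n"
  shows "0 \<le> Re (cinner y (specmat n u f *\<^sub>v y))"
proof -
  have "Re (cinner y (specmat n u f *\<^sub>v y)) = (\<Sum>i<n. f i * (cmod (cinner (u i) y))\<^sup>2)"
    unfolding specmat_quad[OF u y] Re_sum
    by (intro sum.cong refl) (simp add: complex_norm_square[symmetric] mult.commute del: of_real_power)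
  also have "\<dots> \<ge> 0" using f by (intro sum_nonneg) auto
  finally show ?thesis .
qed

lemma specmat_psd: assumes u: "onb n u" and f: "\<forall>i. f i \<ge> 0" shows "psd (specmat n u f)"
  unfolding psd_def using specmat_quad_Re[OF u f] specmat_adj[of n u f] by (simp add: specmat_def)

lemma sqrt_unique:
  assumes u: "onb n u" and f: "\<forall>i. f i \<ge> 0"
    and B: "B \<in> carrier_mat n n" and pB: "psd B" and BB: "B * B = specmat n u f * specmat n u f"
  shows "B = specmat n u f"
proof -
  define C where "C = specmat n u f"
  have C: "C \<in> carrier_mat n n" unfolding C_def by simp
  have hC: "adj C = C" unfolding C_def by (rule specmat_adj)
  have hB: "adj B = B" using pB unfolding psd_def by simp
  have dB: "dim_row B = n" using B by simp
  have tCge: "\<And>y. y \<in> carrier_vec n \<Longrightarrow> 0 \<le> Re (cinner y (C *\<^sub>v y))"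
    unfolding C_def using specmat_quad_Re[OF u f] .
  define D where "D = B - C"
  have D: "D \<in> carrier_mat n n" unfolding D_def using B C by (simp add: minus_carrier_mat)
  have hD: "adj D = D" unfolding D_def using adj_minus[OF B C] hB hC by simp
  obtain y \<mu> where yc: "\<forall>i<n. y i \<in> carrier_vec n"
    and yo: "\<forall>i<n. \<forall>j<n. cinner (y i) (y j) = (if i = j then 1 else 0)"
    and ye: "\<forall>i<n. D *\<^sub>v y i = complex_of_real (\<mu> i) \<cdot>\<^sub>v y i"
    using spectral[OF D hD] by blast
  have yonb: "onb n y" unfolding onb_def using yc yo by simp
  have mu0: "\<And>i. i < n \<Longrightarrow> \<mu> i = 0"
  proof -
    fix i assume i: "i < n"
    define z where "z = y i"
    define m where "m = \<mu> i"
    have z: "z \<in> carrier_vec n" unfolding z_def using yc i by simp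
    have z1: "Re (cinner z z) = 1" unfolding z_def using yo i by simp
    define b where "b = B *\<^sub>v z"
    define c where "c = C *\<^sub>v z"
    have b: "b \<in> carrier_vec n" unfolding b_def using B z by simp
    have c: "c \<in> carrier_vec n" unfolding c_def using C z by simp
    have mz: "complex_of_real m \<cdot>\<^sub>v z \<in> carrier_vec n" using z by simp
    have Dz: "D *\<^sub>v z = b - c" unfolding D_def b_def c_def using B C z by (simp add: minus_mult_distrib_mat_vec)
    hence bmc: "b - c = complex_of_real m \<cdot>\<^sub>v z" using ye i unfolding z_def m_def by simp
    have bk: "\<And>k. k < n \<Longrightarrow> b $ k - c $ k = complex_of_real m * z $ k"
    proof -
      fix k assume k: "k < n"
      have "(b - c) $ k = (complex_of_real m \<cdot>\<^sub>v z) $ k" using bmc by simp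
      thus "b $ k - c $ k = complex_of_real m * z $ k" using k b c z by simp
    qed
    have bc: "b = c + complex_of_real m \<cdot>\<^sub>v z"
      by (rule eq_vecI) (use bk b c z in \<open>auto simp: algebra_simps\<close>)
    have cb: "c = b + complex_of_real (- m) \<cdot>\<^sub>v z"
      by (rule eq_vecI) (use bk b c z in \<open>auto simp: algebra_simps\<close>)
    have E: "cinner b b = cinner c c"
    proof -
      have "cinner b b = cinner z (B *\<^sub>v b)" unfolding b_def using cinner_herm[OF B hB z b, symmetric] unfolding b_def .
      also have "B *\<^sub>v b = (B * B) *\<^sub>v z" unfolding b_def using assoc_mult_mat_vec[OF B B z] by simp
      also have "B * B = C * C" using BB unfolding C_def .
      also have "(C * C) *\<^sub>v z = C *\<^sub>v c" unfolding c_def using assoc_mult_mat_vec[OF C C z] by simp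
      also have "cinner z (C *\<^sub>v c) = cinner c c" unfolding c_def using cinner_herm[OF C hC z c] unfolding c_def .
      finally show ?thesis .
    qed
    have tB: "0 \<le> Re (cinner z b)" unfolding b_def using psd_Re[OF pB] z dB by simp
    have tC: "0 \<le> Re (cinner z c)" unfolding c_def using tCge[OF z] .
    have e1: "Re (cinner b b) = Re (cinner c c) + 2 * m * Re (cinner z c) + m * m"
      using cinner_expand_Re[OF c z, of m] z1 bc by simp
    have e2: "Re (cinner c c) = Re (cinner b b) + 2 * (-m) * Re (cinner z b) + m * m"
      using cinner_expand_Re[OF b z, of "-m"] z1 cb by simp
    have h1: "m * m = - 2 * (m * Re (cinner z c))" using e1 E by simp
    have h2: "m * m = 2 * (m * Re (cinner z b))" using e2 E by simp
    show "\<mu> i = 0" unfolding m_def[symmetric]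
    proof (rule ccontr)
      assume "m \<noteq> 0"
      hence mm: "m * m > 0" by (metis not_real_square_gt_zero)
      show False
      proof (cases "m > 0")
        case True
        hence "m * Re (cinner z c) \<ge> 0" using tC by simp
        thus False using h1 mm by linarith
      next
        case False
        hence "m * Re (cinner z b) \<le> 0" using tB by (simp add: mult_nonpos_nonneg)
        thus False using h2 mm by linarith
      qed
    qed
  qed
  have "D = specmat n y \<mu>" by (rule spec_expand[OF yonb D ye])
  also have "\<dots> = 0\<^sub>m n n" by (rule eq_matI) (auto simp: specmat_def mu0)
  finally have "B - C = 0\<^sub>m n n" unfolding D_def .
  hence "B = C"
  proof -
    assume z: "B - C = 0\<^sub>m n n"
    show "B = C"
    proof (rule eq_matI)
      fix a b assume "a < dim_row C" "b < dim_col C"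
      hence ab: "a < n" "b < n" using C by auto
      have "(B - C) $$ (a,b) = 0" using z ab by simp
      thus "B $$ (a,b) = C $$ (a,b)" using ab B C by simp
    qed (use B C in auto)
  qed
  thus ?thesis unfolding C_def .
qed

lemma trace_norm_spec:
  assumes X: "X \<in> carrier_mat n n" and hX: "adj X = X" and u: "onb n u"
    and eig: "\<forall>i<n. X *\<^sub>v u i = complex_of_real (d i) \<cdot>\<^sub>v u i"
  shows "trace_norm X = (\<Sum>i<n. \<bar>d i\<bar>)"
proof -
  have Xs: "X = specmat n u d" by (rule spec_expand[OF u X eig])
  define C where "C = specmat n u (\<lambda>i. \<bar>d i\<bar>)"
  have C: "C \<in> carrier_mat n n" unfolding C_def by simp
  have XX: "adj X * X = specmat n u (\<lambda>i. d i * d i)" unfolding hX unfolding Xs by (rule specmat_mult[OF u])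
  have CC: "C * C = adj X * X" unfolding XX C_def specmat_mult[OF u] abs_mult_self_eq ..
  have pC: "psd C" unfolding C_def by (rule specmat_psd[OF u]) simp
  have sq: "psd_sqrt (adj X * X) = C" unfolding psd_sqrt_def
  proof (rule the_equality)
    have "dim_row C = dim_row (adj X * X)" using C X by simp
    thus "dim_row C = dim_row (adj X * X) \<and> psd C \<and> C * C = adj X * X" using pC CC by blast
  next
    fix B assume B: "dim_row B = dim_row (adj X * X) \<and> psd B \<and> B * B = adj X * X"
    hence dB: "dim_row B = n" using X by simp
    have Bc: "B \<in> carrier_mat n n" using B dB unfolding psd_def by metis
    have BB: "B * B = C * C" using B CC by simp
    show "B = C" unfolding C_def by (rule sqrt_unique[OF u _ Bc]) (use B BB in \<open>auto simp: C_def\<close>)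
  qed
  have "mtrace C = (\<Sum>a<n. \<Sum>i<n. complex_of_real \<bar>d i\<bar> * (u i $ a * cnj (u i $ a)))"
    unfolding mtrace_def C_def by (simp add: specmat_def)
  also have "\<dots> = (\<Sum>i<n. complex_of_real \<bar>d i\<bar> * (\<Sum>a<n. cnj (u i $ a) * u i $ a))"
  proof -
    have "(\<Sum>a<n. \<Sum>i<n. complex_of_real \<bar>d i\<bar> * (u i $ a * cnj (u i $ a)))
      = (\<Sum>i<n. \<Sum>a<n. complex_of_real \<bar>d i\<bar> * (u i $ a * cnj (u i $ a)))" by (rule sum.swap)
    also have "\<dots> = (\<Sum>i<n. complex_of_real \<bar>d i\<bar> * (\<Sum>a<n. u i $ a * cnj (u i $ a)))"
      by (simp only: sum_distrib_left)
    also have "\<dots> = (\<Sum>i<n. complex_of_real \<bar>d i\<bar> * (\<Sum>a<n. cnj (u i $ a) * u i $ a))"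
      by (simp only: mult.commute[of "u _ $ _"])
    finally show ?thesis .
  qed
  also have "\<dots> = (\<Sum>i<n. complex_of_real \<bar>d i\<bar>)"
  proof (intro sum.cong refl)
    fix i assume "i \<in> {..<n}"
    hence "u i \<in> carrier_vec n" "cinner (u i) (u i) = 1" using u unfolding onb_def by auto
    thus "complex_of_real \<bar>d i\<bar> * (\<Sum>a<n. cnj (u i $ a) * u i $ a) = complex_of_real \<bar>d i\<bar>"
      using cinner_carrier[of "u i" n "u i"] by simp
  qed
  finally show ?thesis unfolding trace_norm_def sq by simp
qed



lemma cs_real: assumes "finite A"
  shows "(\<Sum>i\<in>A. f i * g i)\<^sup>2 \<le> (\<Sum>i\<in>A. (f i)\<^sup>2) * (\<Sum>i\<in>A. (g i :: real)\<^sup>2)"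
proof -
  have P: "(\<Sum>i\<in>A. (f i)\<^sup>2) * (\<Sum>i\<in>A. (g i)\<^sup>2) = (\<Sum>i\<in>A. \<Sum>j\<in>A. (f i)\<^sup>2 * (g j)\<^sup>2)"
    by (rule sum_product)
  have P2: "(\<Sum>i\<in>A. \<Sum>j\<in>A. (f j)\<^sup>2 * (g i)\<^sup>2) = (\<Sum>i\<in>A. \<Sum>j\<in>A. (f i)\<^sup>2 * (g j)\<^sup>2)"
    by (rule sum.swap)
  have Q: "(\<Sum>i\<in>A. f i * g i)\<^sup>2 = (\<Sum>i\<in>A. \<Sum>j\<in>A. (f i * g i) * (f j * g j))"
    unfolding power2_eq_square by (rule sum_product)
  have "0 \<le> (\<Sum>i\<in>A. \<Sum>j\<in>A. (f i * g j - f j * g i)\<^sup>2)" by (intro sum_nonneg) auto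
  also have "\<dots> = (\<Sum>i\<in>A. \<Sum>j\<in>A. (f i)\<^sup>2 * (g j)\<^sup>2 + (f j)\<^sup>2 * (g i)\<^sup>2 - 2 * ((f i * g i) * (f j * g j)))"
    by (intro sum.cong refl) (simp add: power2_eq_square algebra_simps)
  also have "\<dots> = (\<Sum>i\<in>A. \<Sum>j\<in>A. (f i)\<^sup>2 * (g j)\<^sup>2) + (\<Sum>i\<in>A. \<Sum>j\<in>A. (f j)\<^sup>2 * (g i)\<^sup>2)
      - 2 * (\<Sum>i\<in>A. \<Sum>j\<in>A. (f i * g i) * (f j * g j))"
    by (simp add: sum.distrib sum_subtractf sum_distrib_left)
  also have "\<dots> = 2 * ((\<Sum>i\<in>A. (f i)\<^sup>2) * (\<Sum>i\<in>A. (g i)\<^sup>2)) - 2 * (\<Sum>i\<in>A. f i * g i)\<^sup>2"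
    unfolding P Q P2 by simp
  finally show ?thesis by simp
qed

lemma cs_complex: assumes "finite A"
  shows "(cmod (\<Sum>i\<in>A. f i * g i))\<^sup>2 \<le> (\<Sum>i\<in>A. (cmod (f i))\<^sup>2) * (\<Sum>i\<in>A. (cmod (g i))\<^sup>2)"
proof -
  have "cmod (\<Sum>i\<in>A. f i * g i) \<le> (\<Sum>i\<in>A. cmod (f i) * cmod (g i))"
    by (rule order.trans[OF norm_sum]) (simp add: norm_mult)
  hence "(cmod (\<Sum>i\<in>A. f i * g i))\<^sup>2 \<le> (\<Sum>i\<in>A. cmod (f i) * cmod (g i))\<^sup>2"
    by (rule power_mono) simp
  also have "\<dots> \<le> (\<Sum>i\<in>A. (cmod (f i))\<^sup>2) * (\<Sum>i\<in>A. (cmod (g i))\<^sup>2)" by (rule cs_real[OF assms])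
  finally show ?thesis .
qed

lemma cs_sqrt: assumes "finite A"
  shows "(\<Sum>i\<in>A. f i * g i) \<le> sqrt (\<Sum>i\<in>A. (f i)\<^sup>2) * sqrt (\<Sum>i\<in>A. (g i :: real)\<^sup>2)"
proof -
  have "(\<Sum>i\<in>A. f i * g i) \<le> \<bar>\<Sum>i\<in>A. f i * g i\<bar>" by simp
  also have "\<dots> = sqrt ((\<Sum>i\<in>A. f i * g i)\<^sup>2)" by simp
  also have "\<dots> \<le> sqrt ((\<Sum>i\<in>A. (f i)\<^sup>2) * (\<Sum>i\<in>A. (g i)\<^sup>2))" by (rule real_sqrt_le_mono[OF cs_real[OF assms]])
  finally show ?thesis by (simp add: real_sqrt_mult)
qed

lemma key_real: fixes x y r q S :: real
  assumes x: "x \<ge> 0" and y: "y \<ge> 0" and xy: "x\<^sup>2 + y\<^sup>2 = 1" and r: "r \<ge> 0" and q: "q \<ge> 0"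
    and rq: "r\<^sup>2 + q\<^sup>2 = 1" and S: "0 \<le> S" "S \<le> y * q"
  shows "x\<^sup>2 - (x * r - S)\<^sup>2 \<le> q"
proof (cases "x * r \<ge> y * q")
  case True
  hence "0 \<le> x * r - y * q" "x * r - y * q \<le> x * r - S" using S by auto
  hence "(x * r - y * q)\<^sup>2 \<le> (x * r - S)\<^sup>2" using power_mono[of "x*r - y*q" "x*r - S" 2] by simp
  moreover have "x\<^sup>2 - (x * r - y * q)\<^sup>2 = q * (q * (x\<^sup>2 - y\<^sup>2) + r * (2 * x * y))"
  proof -
    have "x\<^sup>2 = x\<^sup>2 * (r\<^sup>2 + q\<^sup>2)" using rq by simp
    thus ?thesis by (simp add: power2_eq_square algebra_simps)
  qed
  moreover have "q * (x\<^sup>2 - y\<^sup>2) + r * (2 * x * y) \<le> 1"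
  proof -
    have "(q * (x\<^sup>2 - y\<^sup>2) + r * (2 * x * y))\<^sup>2 \<le> (q\<^sup>2 + r\<^sup>2) * ((x\<^sup>2 - y\<^sup>2)\<^sup>2 + (2 * x * y)\<^sup>2)"
      using cs_real[of "{0::nat,1}" "\<lambda>i. if i = 0 then q else r" "\<lambda>i. if i = 0 then x\<^sup>2 - y\<^sup>2 else 2 * x * y"] by simp
    also have "(x\<^sup>2 - y\<^sup>2)\<^sup>2 + (2 * x * y)\<^sup>2 = (x\<^sup>2 + y\<^sup>2)\<^sup>2" by (simp add: power2_eq_square algebra_simps)
    finally have "(q * (x\<^sup>2 - y\<^sup>2) + r * (2 * x * y))\<^sup>2 \<le> 1\<^sup>2" using xy rq by (simp add: add.commute)
    thus ?thesis by (metis abs_le_square_iff abs_one abs_le_D1)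
  qed
  ultimately show ?thesis using q by (smt (verit) mult_left_le)
next
  case False
  have "x\<^sup>2 * r\<^sup>2 \<le> y\<^sup>2 * q\<^sup>2" using False x r by (metis less_le_not_le mult_nonneg_nonneg nle_le power_mono power_mult_distrib)
  hence "x\<^sup>2 \<le> q\<^sup>2"
  proof -
    assume h: "x\<^sup>2 * r\<^sup>2 \<le> y\<^sup>2 * q\<^sup>2"
    have "x\<^sup>2 = x\<^sup>2 * r\<^sup>2 + x\<^sup>2 * q\<^sup>2" using rq by (metis distrib_left mult.right_neutral)
    also have "\<dots> \<le> y\<^sup>2 * q\<^sup>2 + x\<^sup>2 * q\<^sup>2" using h by simp
    also have "\<dots> = q\<^sup>2" using xy by (metis distrib_right mult_1 add.commute)
    finally show ?thesis .
  qed
  moreover have "q\<^sup>2 \<le> q"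
  proof -
    have "q\<^sup>2 \<le> 1" using rq by (smt (verit) zero_le_power2)
    hence "q \<le> 1" using q by (metis abs_le_square_iff abs_one abs_le_D1 power_one)
    thus ?thesis using q by (simp add: power2_eq_square mult_left_le)
  qed
  ultimately show ?thesis by (smt (verit) zero_le_power2)
qed



definition tau_of :: "nat \<Rightarrow> 'r set \<Rightarrow> ('r \<Rightarrow> nat \<Rightarrow> complex) \<Rightarrow> complex mat" where
  "tau_of n R b = mat n n (\<lambda>(a,c). \<Sum>r\<in>R. b r a * cnj (b r c))"

definition qf :: "nat \<Rightarrow> 'r set \<Rightarrow> ('r \<Rightarrow> nat \<Rightarrow> complex) \<Rightarrow> complex vec \<Rightarrow> real" where
  "qf n R b v = (\<Sum>r\<in>R. (cmod (\<Sum>a<n. cnj (b r a) * v $ a))\<^sup>2)"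

lemma X_carrier: "tau_of n R b - proj (ket n phi) \<in> carrier_mat n n"
  by (auto simp: tau_of_def proj_def ket_def)

lemma X_entry: "a < n \<Longrightarrow> c < n \<Longrightarrow> (tau_of n R b - proj (ket n phi)) $$ (a,c)
   = (\<Sum>r\<in>R. b r a * cnj (b r c)) - (if a = phi \<and> c = phi then 1 else 0)"
  by (auto simp: tau_of_def proj_def ket_def unit_vec_def)

lemma X_herm: "adj (tau_of n R b - proj (ket n phi)) = tau_of n R b - proj (ket n phi)"
proof (rule eq_matI)
  have X: "tau_of n R b - proj (ket n phi) \<in> carrier_mat n n" by (rule X_carrier)
  fix a c assume "a < dim_row (tau_of n R b - proj (ket n phi))" "c < dim_col (tau_of n R b - proj (ket n phi))"
  hence ac: "a < n" "c < n" using X by auto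
  have "adj (tau_of n R b - proj (ket n phi)) $$ (a, c) = cnj ((tau_of n R b - proj (ket n phi)) $$ (c, a))"
    using ac carrier_matD[OF X] by simp
  also have "\<dots> = (tau_of n R b - proj (ket n phi)) $$ (a, c)"
    unfolding X_entry[OF ac(2,1)] X_entry[OF ac] by (auto simp: mult.commute)
  finally show "adj (tau_of n R b - proj (ket n phi)) $$ (a, c) = (tau_of n R b - proj (ket n phi)) $$ (a, c)" .
qed (auto simp: proj_def ket_def)

lemma cinner_mat_expand: assumes "M \<in> carrier_mat n n" "v \<in> carrier_vec n"
  shows "cinner v (M *\<^sub>v v) = (\<Sum>a<n. \<Sum>c<n. cnj (v $ a) * M $$ (a,c) * v $ c)"
  using assms by (simp add: cinner_carrier[of _ n] mve[OF assms] sum_distrib_left mult.assoc del: index_mult_mat_vec)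

lemma quadX: assumes v: "v \<in> carrier_vec n" and phi: "phi < n"
  shows "Re (cinner v ((tau_of n R b - proj (ket n phi)) *\<^sub>v v)) = qf n R b v - (cmod (v $ phi))\<^sup>2"
proof -
  define w where "w r = (\<Sum>c<n. cnj (b r c) * v $ c)" for r
  have "cinner v ((tau_of n R b - proj (ket n phi)) *\<^sub>v v)
    = (\<Sum>a<n. \<Sum>c<n. cnj (v $ a) * ((\<Sum>r\<in>R. b r a * cnj (b r c)) - (if a = phi \<and> c = phi then 1 else 0)) * v $ c)"
    unfolding cinner_mat_expand[OF X_carrier v] by (intro sum.cong refl) (simp add: X_entry)
  also have "\<dots> = (\<Sum>a<n. \<Sum>c<n. \<Sum>r\<in>R. cnj (v $ a) * b r a * (cnj (b r c) * v $ c))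
        - (\<Sum>a<n. \<Sum>c<n. cnj (v $ a) * (if a = phi \<and> c = phi then 1 else 0) * v $ c)"
    by (simp add: sum_subtractf sum_distrib_left sum_distrib_right algebra_simps)
  also have "(\<Sum>a<n. \<Sum>c<n. cnj (v $ a) * (if a = phi \<and> c = phi then 1 else 0) * v $ c) = cnj (v $ phi) * v $ phi"
  proof -
    have e: "\<And>a c. cnj (v $ a) * (if a = phi \<and> c = phi then 1 else 0) * v $ c = (if c = phi then (if a = phi then cnj (v $ a) * v $ phi else 0) else 0)"
      by auto
    have "\<And>a. (\<Sum>c<n. cnj (v $ a) * (if a = phi \<and> c = phi then 1 else 0) * v $ c) = (if a = phi then cnj (v $ a) * v $ phi else 0)"
      unfolding e using phi by simp
    thus ?thesis using phi by simp
  qed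
  also have "(\<Sum>a<n. \<Sum>c<n. \<Sum>r\<in>R. cnj (v $ a) * b r a * (cnj (b r c) * v $ c)) = (\<Sum>r\<in>R. cnj (w r) * w r)"
  proof -
    have "(\<Sum>a<n. \<Sum>c<n. \<Sum>r\<in>R. cnj (v $ a) * b r a * (cnj (b r c) * v $ c))
       = (\<Sum>r\<in>R. \<Sum>a<n. \<Sum>c<n. cnj (v $ a) * b r a * (cnj (b r c) * v $ c))" by (rule sum_swap3)
    also have "\<dots> = (\<Sum>r\<in>R. (\<Sum>a<n. cnj (v $ a) * b r a) * w r)"
      unfolding w_def by (simp only: sum_product)
    also have "\<dots> = (\<Sum>r\<in>R. cnj (w r) * w r)" unfolding w_def by (simp add: mult.commute)
    finally show ?thesis .
  qed
  finally have "cinner v ((tau_of n R b - proj (ket n phi)) *\<^sub>v v) = (\<Sum>r\<in>R. cnj (w r) * w r) - cnj (v $ phi) * v $ phi" .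
  moreover have rz: "\<And>z. Re (cnj z * z) = (cmod z)\<^sup>2"
  proof -
    fix z :: complex
    have "cnj z * z = complex_of_real ((cmod z)\<^sup>2)" unfolding complex_norm_square by (rule mult.commute)
    thus "Re (cnj z * z) = (cmod z)\<^sup>2" by (simp only: Re_complex_of_real)
  qed
  moreover have "Re (\<Sum>r\<in>R. cnj (w r) * w r) = qf n R b v"
    unfolding qf_def Re_sum w_def by (intro sum.cong refl) (rule rz)
  ultimately show ?thesis by (simp only: minus_complex.sel)
qed

lemma trace_X: assumes phi: "phi < n"
  shows "mtrace (tau_of n R b - proj (ket n phi)) = complex_of_real (\<Sum>r\<in>R. \<Sum>a<n. (cmod (b r a))\<^sup>2) - 1"
proof -
  have "mtrace (tau_of n R b - proj (ket n phi)) = (\<Sum>a<n. (\<Sum>r\<in>R. b r a * cnj (b r a)) - (if a = phi then 1 else 0))"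
    unfolding mtrace_def using X_carrier[of n R b phi] by (intro sum.cong) (auto simp: X_entry)
  also have "\<dots> = (\<Sum>a<n. \<Sum>r\<in>R. b r a * cnj (b r a)) - 1" using phi by (simp add: sum_subtractf)
  also have "(\<Sum>a<n. \<Sum>r\<in>R. b r a * cnj (b r a)) = complex_of_real (\<Sum>r\<in>R. \<Sum>a<n. (cmod (b r a))\<^sup>2)"
    unfolding of_real_sum by (subst sum.swap) (simp only: complex_norm_square)
  finally show ?thesis .
qed

lemma specmat_trace: assumes u: "onb n u" shows "mtrace (specmat n u f) = (\<Sum>i<n. complex_of_real (f i))"
proof -
  have "mtrace (specmat n u f) = (\<Sum>a<n. \<Sum>i<n. complex_of_real (f i) * (u i $ a * cnj (u i $ a)))"
    unfolding mtrace_def by (simp add: specmat_def)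
  also have "\<dots> = (\<Sum>i<n. \<Sum>a<n. complex_of_real (f i) * (u i $ a * cnj (u i $ a)))" by (rule sum.swap)
  also have "\<dots> = (\<Sum>i<n. complex_of_real (f i) * (\<Sum>a<n. u i $ a * cnj (u i $ a)))"
    by (simp only: sum_distrib_left)
  also have "\<dots> = (\<Sum>i<n. complex_of_real (f i))"
  proof (intro sum.cong refl)
    fix i assume "i \<in> {..<n}"
    hence "u i \<in> carrier_vec n" "cinner (u i) (u i) = 1" using u unfolding onb_def by auto
    thus "complex_of_real (f i) * (\<Sum>a<n. u i $ a * cnj (u i $ a)) = complex_of_real (f i)"
      using cinner_carrier[of "u i" n "u i"] by (simp add: mult.commute)
  qed
  finally show ?thesis .
qed

lemma two_eig: assumes M: "M \<in> carrier_mat n n" and x: "x \<in> carrier_vec n" and y: "y \<in> carrier_vec n"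
  and xx: "cinner x x = 1" and yy: "cinner y y = 1" and xy: "cinner x y = 0"
  and Mx: "M *\<^sub>v x = lx \<cdot>\<^sub>v x" and My: "M *\<^sub>v y = ly \<cdot>\<^sub>v y"
  shows "cinner (\<alpha> \<cdot>\<^sub>v x + \<beta> \<cdot>\<^sub>v y) (M *\<^sub>v (\<alpha> \<cdot>\<^sub>v x + \<beta> \<cdot>\<^sub>v y)) = cnj \<alpha> * \<alpha> * lx + cnj \<beta> * \<beta> * ly"
proof -
  have yx: "cinner y x = 0" using cinner_swap[OF x y] xy by simp
  have ax: "\<alpha> \<cdot>\<^sub>v x \<in> carrier_vec n" and bY: "\<beta> \<cdot>\<^sub>v y \<in> carrier_vec n" using x y by auto
  have "M *\<^sub>v (\<alpha> \<cdot>\<^sub>v x + \<beta> \<cdot>\<^sub>v y) = (\<alpha> * lx) \<cdot>\<^sub>v x + (\<beta> * ly) \<cdot>\<^sub>v y"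
    using mult_add_distrib_mat_vec[OF M ax bY] mult_mat_vec[OF M x] mult_mat_vec[OF M y] Mx My
    by (simp add: smult_smult_assoc mult.commute)
  moreover have "cinner (\<alpha> \<cdot>\<^sub>v x + \<beta> \<cdot>\<^sub>v y) ((\<alpha> * lx) \<cdot>\<^sub>v x + (\<beta> * ly) \<cdot>\<^sub>v y) = cnj \<alpha> * \<alpha> * lx + cnj \<beta> * \<beta> * ly"
    using x y ax bY xx yy xy yx
    by (simp add: cinner_add_left[of _ n] cinner_add_right[of _ n] cinner_smult_left[of _ n] cinner_smult_right algebra_simps)
  ultimately show ?thesis by simp
qed

lemma key_bound:
  assumes R: "finite R" and phi: "phi < n" and nb: "(\<Sum>r\<in>R. \<Sum>a<n. (cmod (b r a))\<^sup>2) = 1"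
    and u: "u \<in> carrier_vec n" and u1: "cinner u u = 1"
  shows "(cmod (u $ phi))\<^sup>2 - qf n R b u \<le> sqrt (1 - (\<Sum>r\<in>R. (cmod (b r phi))\<^sup>2))"
proof -
  define I where "I = {..<n} - {phi}"
  have fI: "finite I" unfolding I_def by simp
  have split: "\<And>f :: nat \<Rightarrow> 'x::comm_monoid_add. (\<Sum>a<n. f a) = f phi + (\<Sum>a\<in>I. f a)"
    unfolding I_def using phi by (subst sum.remove[of _ phi]) auto
  define a0 where "a0 = (\<Sum>r\<in>R. (cmod (b r phi))\<^sup>2)"
  define g where "g = (cmod (u $ phi))\<^sup>2"
  define al where "al r = cnj (b r phi) * u $ phi" for r
  define sr where "sr r = (\<Sum>a\<in>I. cnj (b r a) * u $ a)" for r
  have qfs: "qf n R b u = (\<Sum>r\<in>R. (cmod (al r + sr r))\<^sup>2)"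
    unfolding qf_def al_def sr_def by (simp only: split)
  have low: "\<And>r. (cmod (al r) - cmod (sr r))\<^sup>2 \<le> (cmod (al r + sr r))\<^sup>2"
  proof -
    fix r
    have "cmod (al r) - cmod (sr r) \<le> cmod (al r + sr r)" by (rule norm_diff_ineq)
    moreover have "cmod (sr r) - cmod (al r) \<le> cmod (al r + sr r)"
      using norm_diff_ineq[of "sr r" "al r"] by (simp add: add.commute)
    ultimately have "\<bar>cmod (al r) - cmod (sr r)\<bar> \<le> \<bar>cmod (al r + sr r)\<bar>" by simp
    thus "(cmod (al r) - cmod (sr r))\<^sup>2 \<le> (cmod (al r + sr r))\<^sup>2" by (metis abs_le_square_iff abs_norm_cancel)
  qed
  define A where "A = sqrt (\<Sum>r\<in>R. (cmod (al r))\<^sup>2)"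
  define S where "S = sqrt (\<Sum>r\<in>R. (cmod (sr r))\<^sup>2)"
  have A2: "A\<^sup>2 = (\<Sum>r\<in>R. (cmod (al r))\<^sup>2)" unfolding A_def by (rule real_sqrt_pow2, rule sum_nonneg, simp)
  have S2: "S\<^sup>2 = (\<Sum>r\<in>R. (cmod (sr r))\<^sup>2)" unfolding S_def by (rule real_sqrt_pow2, rule sum_nonneg, simp)
  have S0: "S \<ge> 0" unfolding S_def by (rule real_sqrt_ge_zero, rule sum_nonneg, simp)
  have csAS: "(\<Sum>r\<in>R. cmod (al r) * cmod (sr r)) \<le> A * S"
    unfolding A_def S_def by (rule cs_sqrt[OF R])
  have "(A - S)\<^sup>2 = A\<^sup>2 + S\<^sup>2 - 2 * (A * S)" by (simp add: power2_eq_square algebra_simps)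
  also have "\<dots> \<le> (\<Sum>r\<in>R. (cmod (al r))\<^sup>2) + (\<Sum>r\<in>R. (cmod (sr r))\<^sup>2) - 2 * (\<Sum>r\<in>R. cmod (al r) * cmod (sr r))"
    unfolding A2 S2 using csAS by simp
  also have "\<dots> = (\<Sum>r\<in>R. (cmod (al r) - cmod (sr r))\<^sup>2)"
    by (simp add: power2_eq_square algebra_simps sum.distrib sum_subtractf sum_distrib_left)
  also have "\<dots> \<le> qf n R b u" unfolding qfs by (rule sum_mono) (rule low)
  finally have qlow: "(A - S)\<^sup>2 \<le> qf n R b u" .
  have Aval: "A = sqrt a0 * sqrt g"
  proof -
    have "(\<Sum>r\<in>R. (cmod (al r))\<^sup>2) = a0 * g" unfolding al_def a0_def g_def
      by (simp add: norm_mult power_mult_distrib sum_distrib_right)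
    thus ?thesis unfolding A_def by (simp add: real_sqrt_mult)
  qed
  have nbI: "(\<Sum>r\<in>R. \<Sum>a\<in>I. (cmod (b r a))\<^sup>2) = 1 - a0"
    using nb unfolding a0_def split by (simp add: sum.distrib)
  have uI: "(\<Sum>a\<in>I. (cmod (u $ a))\<^sup>2) = 1 - g"
  proof -
    have "(\<Sum>a<n. (cmod (u $ a))\<^sup>2) = 1" using cinner_self_Re[OF u] u1 by simp
    thus ?thesis unfolding g_def split by simp
  qed
  have a01: "a0 \<le> 1" "0 \<le> a0" using nbI unfolding a0_def
    by (smt (verit) sum_nonneg zero_le_power2)+
  have g1: "g \<le> 1" "0 \<le> g" using uI unfolding g_def by (smt (verit) sum_nonneg zero_le_power2)+
  have "S\<^sup>2 \<le> (\<Sum>r\<in>R. (\<Sum>a\<in>I. (cmod (b r a))\<^sup>2) * (\<Sum>a\<in>I. (cmod (u $ a))\<^sup>2))"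
    unfolding S2 sr_def by (rule sum_mono) (use cs_complex[OF fI, of "\<lambda>a. cnj (b _ a)" "\<lambda>a. u $ a"] in simp)
  also have "\<dots> = (1 - a0) * (1 - g)" unfolding uI sum_distrib_right[symmetric] nbI ..
  finally have "S \<le> sqrt ((1 - a0) * (1 - g))" using S0 by (simp add: real_le_rsqrt)
  hence Sle: "S \<le> sqrt (1 - g) * sqrt (1 - a0)" by (simp add: real_sqrt_mult mult.commute)
  have kr: "(sqrt g)\<^sup>2 - (sqrt g * sqrt a0 - S)\<^sup>2 \<le> sqrt (1 - a0)"
    by (rule key_real) (use a01 g1 S0 Sle in auto)
  have "g - qf n R b u \<le> (sqrt g)\<^sup>2 - (sqrt g * sqrt a0 - S)\<^sup>2"
    using qlow g1 unfolding Aval by (simp add: mult.commute)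
  with kr show ?thesis unfolding g_def a0_def by simp
qed



lemma qf_nonneg: "0 \<le> qf n R b v" unfolding qf_def by (rule sum_nonneg) simp

lemma tn_main:
  assumes R: "finite R" and phi: "phi < n" and nb: "(\<Sum>r\<in>R. \<Sum>a<n. (cmod (b r a))\<^sup>2) = 1"
  shows "trace_norm (tau_of n R b - proj (ket n phi)) \<le> 2 * sqrt (1 - (\<Sum>r\<in>R. (cmod (b r phi))\<^sup>2))"
proof -
  define X where "X = tau_of n R b - proj (ket n phi)"
  define a0 where "a0 = (\<Sum>r\<in>R. (cmod (b r phi))\<^sup>2)"
  have X: "X \<in> carrier_mat n n" unfolding X_def by (rule X_carrier)
  have hX: "adj X = X" unfolding X_def by (rule X_herm)
  obtain u d where uc: "\<forall>i<n. u i \<in> carrier_vec n"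
    and uo: "\<forall>i<n. \<forall>j<n. cinner (u i) (u j) = (if i = j then 1 else 0)"
    and ue: "\<forall>i<n. X *\<^sub>v u i = complex_of_real (d i) \<cdot>\<^sub>v u i"
    using spectral[OF X hX] by blast
  have u: "onb n u" unfolding onb_def using uc uo by simp
  have tn: "trace_norm X = (\<Sum>i<n. \<bar>d i\<bar>)" by (rule trace_norm_spec[OF X hX u ue])
  have dq: "\<And>i. i < n \<Longrightarrow> d i = qf n R b (u i) - (cmod (u i $ phi))\<^sup>2"
  proof -
    fix i assume i: "i < n"
    have "Re (cinner (u i) (X *\<^sub>v u i)) = d i" using ue uo i by (simp add: cinner_smult_right)
    thus "d i = qf n R b (u i) - (cmod (u i $ phi))\<^sup>2" using quadX[OF _ phi, of "u i" R b] uc i unfolding X_def by simp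
  qed
  have sumd: "(\<Sum>i<n. d i) = 0"
  proof -
    have "X = specmat n u d" by (rule spec_expand[OF u X ue])
    hence t1: "mtrace X = complex_of_real (\<Sum>i<n. d i)" using specmat_trace[OF u] by (simp only: of_real_sum)
    have t2: "mtrace X = 0" unfolding X_def trace_X[OF phi] nb by simp
    have "complex_of_real (\<Sum>i<n. d i) = 0" by (rule trans[OF t1[symmetric] t2])
    thus ?thesis by (simp only: of_real_eq_0_iff)
  qed
  have a01: "a0 \<le> 1"
  proof -
    have "a0 = (\<Sum>r\<in>R. (cmod (b r phi))\<^sup>2)" unfolding a0_def ..
    also have "\<dots> \<le> (\<Sum>r\<in>R. \<Sum>a<n. (cmod (b r a))\<^sup>2)"
      by (rule sum_mono, rule member_le_sum) (use phi in auto)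
    finally show ?thesis using nb by simp
  qed
  have one_neg: "\<And>i j. i < n \<Longrightarrow> j < n \<Longrightarrow> d i < 0 \<Longrightarrow> d j < 0 \<Longrightarrow> i = j"
  proof (rule ccontr)
    fix i j assume i: "i < n" and j: "j < n" and di: "d i < 0" and dj: "d j < 0" and ij: "i \<noteq> j"
    define gi where "gi = u i $ phi"
    define gj where "gj = u j $ phi"
    have gi0: "gi \<noteq> 0" using dq[OF i] di qf_nonneg[of n R b "u i"] unfolding gi_def by auto
    have gj0: "gj \<noteq> 0" using dq[OF j] dj qf_nonneg[of n R b "u j"] unfolding gj_def by auto
    define v where "v = gj \<cdot>\<^sub>v u i + (- gi) \<cdot>\<^sub>v u j"
    have ui: "u i \<in> carrier_vec n" and uj: "u j \<in> carrier_vec n" using uc i j by auto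
    have v: "v \<in> carrier_vec n" unfolding v_def using ui uj by simp
    have "cinner v (X *\<^sub>v v) = cnj gj * gj * complex_of_real (d i) + cnj (- gi) * (- gi) * complex_of_real (d j)"
      unfolding v_def by (rule two_eig[OF X ui uj]) (use uo ue i j ij in auto)
    moreover have cz: "\<And>z. cnj z * z = complex_of_real ((cmod z)\<^sup>2)" unfolding complex_norm_square by (rule mult.commute)
    ultimately have "cinner v (X *\<^sub>v v) = complex_of_real ((cmod gj)\<^sup>2 * d i + (cmod gi)\<^sup>2 * d j)"
      by (simp only: cz of_real_mult of_real_add complex_cnj_minus minus_mult_minus)
    hence "Re (cinner v (X *\<^sub>v v)) = (cmod gj)\<^sup>2 * d i + (cmod gi)\<^sup>2 * d j" by (simp only: Re_complex_of_real)
    also have "\<dots> < 0"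
    proof -
      have "(cmod gj)\<^sup>2 > 0" "(cmod gi)\<^sup>2 > 0" using gi0 gj0 by auto
      hence "(cmod gj)\<^sup>2 * d i < 0" "(cmod gi)\<^sup>2 * d j < 0" using di dj by (auto simp: mult_pos_neg)
      thus ?thesis by simp
    qed
    finally have neg: "Re (cinner v (X *\<^sub>v v)) < 0" .
    have "v $ phi = 0" unfolding v_def gi_def gj_def using ui uj phi by simp
    hence "Re (cinner v (X *\<^sub>v v)) = qf n R b v" using quadX[OF v phi, of R b] unfolding X_def by simp
    thus False using neg qf_nonneg[of n R b v] by simp
  qed
  have bnd: "\<And>i. i < n \<Longrightarrow> - d i \<le> sqrt (1 - a0)"
  proof -
    fix i assume i: "i < n"
    have "cinner (u i) (u i) = 1" using uo i by simp
    thus "- d i \<le> sqrt (1 - a0)" using key_bound[OF R phi nb, of "u i"] uc i dq[OF i] unfolding a0_def by simp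
  qed
  have sq0: "0 \<le> sqrt (1 - a0)" using a01 by simp
  have "(\<Sum>i<n. \<bar>d i\<bar>) = (\<Sum>i<n. d i + 2 * max 0 (- d i))" by (intro sum.cong refl) auto
  also have "\<dots> = 2 * (\<Sum>i<n. max 0 (- d i))" using sumd by (simp add: sum.distrib sum_distrib_left)
  also have "(\<Sum>i<n. max 0 (- d i)) \<le> sqrt (1 - a0)"
  proof (cases "\<exists>i0<n. d i0 < 0")
    case True
    then obtain i0 where i0: "i0 < n" "d i0 < 0" by blast
    have "(\<Sum>i<n. max 0 (- d i)) = (\<Sum>i<n. if i = i0 then - d i0 else 0)"
    proof (intro sum.cong refl)
      fix i assume "i \<in> {..<n}"
      hence "i < n" by simp
      show "max 0 (- d i) = (if i = i0 then - d i0 else 0)"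
      proof (cases "i = i0")
        case True thus ?thesis using i0 by simp
      next
        case False
        hence "\<not> d i < 0" using one_neg[OF \<open>i < n\<close> i0(1) _ i0(2)] by blast
        thus ?thesis using False by simp
      qed
    qed
    also have "\<dots> = - d i0" using i0 by simp
    finally show ?thesis using bnd[OF i0(1)] by simp
  next
    case False
    hence "(\<Sum>i<n. max 0 (- d i)) = 0" by (intro sum.neutral) auto
    thus ?thesis using sq0 by simp
  qed
  finally show ?thesis unfolding X_def[symmetric] tn a0_def by simp
qed



definition cspec :: "nat \<Rightarrow> (nat \<Rightarrow> complex vec) \<Rightarrow> (nat \<Rightarrow> complex) \<Rightarrow> complex mat" where
  "cspec n u g = mat n n (\<lambda>(a,b). \<Sum>i<n. g i * (u i $ a * cnj (u i $ b)))"

lemma cspec_carrier[simp]: "cspec n u g \<in> carrier_mat n n" by (simp add: cspec_def)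
lemma cspec_dims[simp]: "dim_row (cspec n u g) = n" "dim_col (cspec n u g) = n" by (simp_all add: cspec_def)

lemma cspec_mult: assumes u: "onb n u"
  shows "cspec n u g * cspec n u h = cspec n u (\<lambda>i. g i * h i)"
proof (rule eq_matI)
  fix a b assume "a < dim_row (cspec n u (\<lambda>i. g i * h i))" "b < dim_col (cspec n u (\<lambda>i. g i * h i))"
  hence ab: "a < n" "b < n" by auto
  have "(cspec n u g * cspec n u h) $$ (a,b) = (\<Sum>c<n. (\<Sum>i<n. g i * (u i $ a * cnj (u i $ c))) * (\<Sum>j<n. h j * (u j $ c * cnj (u j $ b))))"
    using ab by (subst mme[OF cspec_carrier cspec_carrier]) (auto simp: cspec_def)
  also have "\<dots> = (\<Sum>c<n. \<Sum>i<n. \<Sum>j<n. (g i * (u i $ a * cnj (u i $ c))) * (h j * (u j $ c * cnj (u j $ b))))"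
    by (simp only: sum_product)
  also have "\<dots> = (\<Sum>i<n. \<Sum>c<n. \<Sum>j<n. (g i * (u i $ a * cnj (u i $ c))) * (h j * (u j $ c * cnj (u j $ b))))"
    by (rule sum.swap)
  also have "\<dots> = (\<Sum>i<n. \<Sum>j<n. \<Sum>c<n. (g i * (u i $ a * cnj (u i $ c))) * (h j * (u j $ c * cnj (u j $ b))))"
    by (intro sum.cong refl sum.swap)
  also have "\<dots> = (\<Sum>i<n. \<Sum>j<n. (g i * h j * u i $ a * cnj (u j $ b)) * (\<Sum>c<n. cnj (u i $ c) * u j $ c))"
    by (intro sum.cong refl) (simp add: sum_distrib_left algebra_simps)
  also have "\<dots> = (\<Sum>i<n. \<Sum>j<n. (g i * h j * u i $ a * cnj (u j $ b)) * (if j = i then 1 else 0))"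
  proof (intro sum.cong refl)
    fix i j assume "i \<in> {..<n}" "j \<in> {..<n}"
    thus "g i * h j * u i $ a * cnj (u j $ b) * (\<Sum>c<n. cnj (u i $ c) * u j $ c) = g i * h j * u i $ a * cnj (u j $ b) * (if j = i then 1 else 0)"
      using u unfolding onb_def by (auto simp: cinner_carrier[symmetric])
  qed
  also have "\<dots> = (\<Sum>i<n. g i * h i * u i $ a * cnj (u i $ b))"
    by (intro sum.cong refl) (simp add: sum_delta_r)
  also have "\<dots> = cspec n u (\<lambda>i. g i * h i) $$ (a,b)" using ab by (simp add: cspec_def mult.assoc)
  finally show "(cspec n u g * cspec n u h) $$ (a,b) = cspec n u (\<lambda>i. g i * h i) $$ (a,b)" .
qed auto

lemma cspec_one: assumes u: "onb n u" shows "cspec n u (\<lambda>i. 1) = 1\<^sub>m n"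
  by (rule eq_matI) (auto simp: cspec_def onb_complete[OF u])

lemma cspec_smult: "c \<cdot>\<^sub>m cspec n u g = cspec n u (\<lambda>i. c * g i)"
  by (rule eq_matI) (auto simp: cspec_def sum_distrib_left mult.assoc)

lemma cspec_pow: assumes u: "onb n u" shows "cspec n u g ^\<^sub>m m = cspec n u (\<lambda>i. g i ^ m)"
proof (induction m)
  case 0 thus ?case using cspec_one[OF u] by simp
next
  case (Suc m) thus ?case using cspec_mult[OF u] by (simp add: mult.commute)
qed

lemma specmat_cspec: "specmat n u f = cspec n u (\<lambda>i. complex_of_real (f i))"
  by (simp add: specmat_def cspec_def)

lemma cspec_adj: "adj (cspec n u g) = cspec n u (\<lambda>i. cnj (g i))"
  by (rule eq_matI) (auto simp: cspec_def mult.commute)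

lemma mat_exp_cspec: assumes u: "onb n u" shows "mat_exp (cspec n u g) = cspec n u (\<lambda>i. exp (g i))"
proof (rule eq_matI)
  fix a b assume "a < dim_row (cspec n u (\<lambda>i. exp (g i)))" "b < dim_col (cspec n u (\<lambda>i. exp (g i)))"
  hence ab: "a < n" "b < n" by auto
  define w where "w i = u i $ a * cnj (u i $ b)" for i
  have conv: "\<And>z :: complex. \<And>m. z ^ m / of_nat (fact m) = z ^ m /\<^sub>R fact m"
    by (simp add: scaleR_conv_of_real divide_inverse mult.commute)
  have "(\<lambda>m. \<Sum>i<n. w i * (g i ^ m /\<^sub>R fact m)) sums (\<Sum>i<n. w i * exp (g i))"
    by (rule sums_sum, rule sums_mult, rule exp_converges)
  moreover have "\<And>m. (cspec n u g ^\<^sub>m m) $$ (a,b) / of_nat (fact m) = (\<Sum>i<n. w i * (g i ^ m /\<^sub>R fact m))"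
    using ab unfolding cspec_pow[OF u] by (simp add: cspec_def w_def sum_divide_distrib conv[symmetric] algebra_simps)
  ultimately have "(\<Sum>m. (cspec n u g ^\<^sub>m m) $$ (a,b) / of_nat (fact m)) = (\<Sum>i<n. w i * exp (g i))"
    by (simp add: sums_iff)
  thus "mat_exp (cspec n u g) $$ (a,b) = cspec n u (\<lambda>i. exp (g i)) $$ (a,b)"
    using ab by (simp add: mat_exp_def cspec_def w_def mult.commute)
qed (auto simp: mat_exp_def)



lemma sum_lessThan_plus: fixes a k :: nat shows "(\<Sum>p<a + k. f p) = (\<Sum>p<a. f p) + (\<Sum>l<k. f (a + l))"
  by (induction k) (simp_all add: add.assoc)

lemma sum_split_mult: fixes m k :: nat shows "(\<Sum>p<m * k. f p) = (\<Sum>i<m. \<Sum>l<k. f (i * k + l))"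
proof (induction m)
  case 0 thus ?case by simp
next
  case (Suc m)
  have "(\<Sum>p<Suc m * k. f p) = (\<Sum>p<m * k + k. f p)" by (simp add: add.commute)
  also have "\<dots> = (\<Sum>p<m * k. f p) + (\<Sum>l<k. f (m * k + l))" by (rule sum_lessThan_plus)
  finally show ?case using Suc by simp
qed

lemma diag_bound:
  fixes w :: "nat \<Rightarrow> real" and z :: "nat \<Rightarrow> complex"
  assumes K: "finite K" and k0: "k0 \<in> K" and w0: "\<forall>k\<in>K. w k \<ge> 0" and w1: "(\<Sum>k\<in>K. w k) = 1"
    and z1: "\<forall>k\<in>K. cmod (z k) = 1" and wk0: "w k0 \<ge> dl\<^sup>2" and dl: "dl\<^sup>2 > 1/2"
  shows "(cmod (\<Sum>k\<in>K. z k * complex_of_real (w k)))\<^sup>2 \<ge> 1 - 4 * dl\<^sup>2 * (1 - dl\<^sup>2)"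
proof -
  have sp: "(\<Sum>k\<in>K. z k * complex_of_real (w k)) = z k0 * complex_of_real (w k0) + (\<Sum>k\<in>K - {k0}. z k * complex_of_real (w k))"
    using K k0 by (rule sum.remove)
  have rest: "cmod (\<Sum>k\<in>K - {k0}. z k * complex_of_real (w k)) \<le> (\<Sum>k\<in>K - {k0}. w k)"
  proof -
    have "cmod (\<Sum>k\<in>K - {k0}. z k * complex_of_real (w k)) \<le> (\<Sum>k\<in>K - {k0}. cmod (z k * complex_of_real (w k)))"
      by (rule norm_sum)
    also have "\<dots> = (\<Sum>k\<in>K - {k0}. w k)" using z1 w0 by (intro sum.cong refl) (auto simp: norm_mult)
    finally show ?thesis .
  qed
  have wr: "(\<Sum>k\<in>K - {k0}. w k) = 1 - w k0" using w1 sum.remove[OF K k0, of w] by simp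
  have "cmod (z k0 * complex_of_real (w k0)) = w k0" using z1 k0 w0 by (simp add: norm_mult)
  hence "cmod (\<Sum>k\<in>K. z k * complex_of_real (w k)) \<ge> w k0 - (1 - w k0)"
    using sp rest wr norm_diff_ineq[of "z k0 * complex_of_real (w k0)" "\<Sum>k\<in>K - {k0}. z k * complex_of_real (w k)"]
    by simp
  moreover have "w k0 - (1 - w k0) \<ge> 0" using wk0 dl by simp
  ultimately have "(cmod (\<Sum>k\<in>K. z k * complex_of_real (w k)))\<^sup>2 \<ge> (2 * w k0 - 1)\<^sup>2"
    by (simp add: power_mono)
  moreover have "(2 * w k0 - 1)\<^sup>2 \<ge> 1 - 4 * dl\<^sup>2 * (1 - dl\<^sup>2)"
  proof -
    have "(w k0 - dl\<^sup>2) * (w k0 + dl\<^sup>2 - 1) \<ge> 0" using wk0 dl by simp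
    thus ?thesis by (simp add: power2_eq_square algebra_simps)
  qed
  ultimately show ?thesis by simp
qed



lemma tensor_ket: assumes "phi < dS" "j < dE"
  shows "tensor_vec (ket dS phi) (ket dE j) = unit_vec (dS * dE) (phi * dE + j)"
proof (rule eq_vecI)
  fix i assume "i < dim_vec (unit_vec (dS * dE) (phi * dE + j))"
  hence i: "i < dS * dE" by simp
  have dE: "0 < dE" using assms by simp
  have idiv: "i div dE < dS" using i by (simp add: less_mult_imp_div_less)
  have "(i div dE = phi \<and> i mod dE = j) \<longleftrightarrow> i = phi * dE + j"
  proof
    assume "i div dE = phi \<and> i mod dE = j"
    thus "i = phi * dE + j" using div_mult_mod_eq[of i dE] by (metis add.commute)
  next
    assume "i = phi * dE + j"
    thus "i div dE = phi \<and> i mod dE = j" using assms dE by simp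
  qed
  thus "tensor_vec (ket dS phi) (ket dE j) $ i = unit_vec (dS * dE) (phi * dE + j) $ i"
    using i idiv dE by (auto simp: tensor_vec_def ket_def unit_vec_def)
qed (simp add: tensor_vec_def ket_def)

lemma cinner_unit: "p < n \<Longrightarrow> cinner v (unit_vec n p) = cnj (v $ p)"
  by (simp add: cinner_def unit_vec_def sum_delta_r)

lemma delta_witness:
  assumes dS: "0 < dS" and dE: "0 < dE" and phi: "phi < dS"
  shows "\<forall>j<dE. \<exists>k<dS*dE. delta dS dE Ev phi \<le> cmod (Ev k $ (phi * dE + j))"
proof -
  define N where "N = dS * dE"
  define F where "F \<sigma> = {cmod (cinner (Ev k) (tensor_vec (ket dS (fst (\<sigma> k))) (ket dE (snd (\<sigma> k)))))
                                 | k. k < dS * dE \<and> fst (\<sigma> k) = phi}" for \<sigma> :: "nat \<Rightarrow> nat \<times> nat"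
  define S where "S = {Min (F \<sigma>) | \<sigma>. inj_on \<sigma> {..<dS * dE} \<and> \<sigma> ` {..<dS * dE} \<subseteq> {..<dS} \<times> {..<dE}}"
  have dl: "delta dS dE Ev phi = Max S" unfolding delta_def S_def F_def ..
  have Frestr: "\<And>\<sigma>. F (restrict \<sigma> {..<dS * dE}) = F \<sigma>" unfolding F_def by auto
  have "S \<subseteq> (\<lambda>\<sigma>. Min (F \<sigma>)) ` (PiE {..<dS * dE} (\<lambda>_. {..<dS} \<times> {..<dE}))"
  proof
    fix x assume "x \<in> S"
    then obtain \<sigma> where x: "x = Min (F \<sigma>)" and s: "\<sigma> ` {..<dS * dE} \<subseteq> {..<dS} \<times> {..<dE}" unfolding S_def by blast
    have "restrict \<sigma> {..<dS * dE} \<in> PiE {..<dS * dE} (\<lambda>_. {..<dS} \<times> {..<dE})" using s by auto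
    moreover have "x = Min (F (restrict \<sigma> {..<dS * dE}))" using x Frestr by simp
    ultimately show "x \<in> (\<lambda>\<sigma>. Min (F \<sigma>)) ` (PiE {..<dS * dE} (\<lambda>_. {..<dS} \<times> {..<dE}))" by blast
  qed
  hence fS: "finite S" by (rule finite_subset) (intro finite_imageI finite_PiE, auto)
  define \<sigma>0 where "\<sigma>0 k = (k div dE, k mod dE)" for k
  have "inj_on \<sigma>0 {..<dS * dE}" unfolding \<sigma>0_def inj_on_def by (metis div_mult_mod_eq prod.inject)
  moreover have "\<sigma>0 ` {..<dS * dE} \<subseteq> {..<dS} \<times> {..<dE}" unfolding \<sigma>0_def using dE
    by (auto simp: less_mult_imp_div_less)
  ultimately have "Min (F \<sigma>0) \<in> S" unfolding S_def by blast
  hence nS: "S \<noteq> {}" by blast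
  have "Max S \<in> S" by (rule Max_in[OF fS nS])
  then obtain \<sigma> where dls: "Max S = Min (F \<sigma>)" and inj: "inj_on \<sigma> {..<dS * dE}"
    and sub: "\<sigma> ` {..<dS * dE} \<subseteq> {..<dS} \<times> {..<dE}" unfolding S_def by blast
  have img: "\<sigma> ` {..<dS * dE} = {..<dS} \<times> {..<dE}"
  proof (rule card_subset_eq)
    show "finite ({..<dS} \<times> {..<dE})" by simp
    show "card (\<sigma> ` {..<dS * dE}) = card ({..<dS} \<times> {..<dE})"
      using card_image[OF inj] by (simp add: card_cartesian_product)
  qed (rule sub)
  show ?thesis
  proof (intro allI impI)
    fix j assume j: "j < dE"
    have "(phi, j) \<in> \<sigma> ` {..<dS * dE}" using img phi j by simp
    then obtain k where k: "k < dS * dE" and sk: "\<sigma> k = (phi, j)" by auto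
    have mem: "cmod (cinner (Ev k) (tensor_vec (ket dS (fst (\<sigma> k))) (ket dE (snd (\<sigma> k))))) \<in> F \<sigma>"
      unfolding F_def mem_Collect_eq by (rule exI[of _ k]) (simp add: k sk)
    have fF: "finite (F \<sigma>)" unfolding F_def by simp
    have "Min (F \<sigma>) \<le> cmod (cinner (Ev k) (tensor_vec (ket dS (fst (\<sigma> k))) (ket dE (snd (\<sigma> k)))))"
      by (rule Min_le[OF fF mem])
    also have "\<dots> = cmod (Ev k $ (phi * dE + j))"
    proof -
      have "phi * dE + j < Suc phi * dE" using j by simp
      also have "\<dots> \<le> dS * dE" using phi by (intro mult_le_mono1) simp
      finally have pj: "phi * dE + j < dS * dE" .
      show ?thesis unfolding sk fst_conv snd_conv tensor_ket[OF phi j] cinner_unit[OF pj] by simp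
    qed
    finally show "\<exists>k<dS*dE. delta dS dE Ev phi \<le> cmod (Ev k $ (phi * dE + j))" using k dl dls by auto
  qed
qed



lemma rho_carrier: "tensor_mat (proj (ket dS phi)) ((1 / of_nat dE) \<cdot>\<^sub>m 1\<^sub>m dE) \<in> carrier_mat (dS * dE) (dS * dE)"
  by (simp add: tensor_mat_def proj_def ket_def)

lemma rho_entry: assumes "a < dS * dE" "b < dS * dE" "phi < dS"
  shows "tensor_mat (proj (ket dS phi)) ((1 / of_nat dE) \<cdot>\<^sub>m 1\<^sub>m dE) $$ (a,b)
     = (if a = b \<and> a div dE = phi then complex_of_real (1 / real dE) else 0)"
proof -
  have dE: "0 < dE" using assms by (metis mult_0_right not_less_zero neq0_conv)
  have ad: "a div dE < dS" "b div dE < dS" using assms by (auto simp: less_mult_imp_div_less)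
  have am: "a mod dE < dE" "b mod dE < dE" using dE by auto
  have eq: "(a div dE = b div dE \<and> a mod dE = b mod dE) \<longleftrightarrow> a = b"
    by (metis div_mult_mod_eq)
  show ?thesis using assms ad am eq
    by (auto simp: tensor_mat_def proj_def ket_def unit_vec_def of_real_divide)
qed

lemma M_entry: assumes U: "U \<in> carrier_mat (dS * dE) (dS * dE)" and p: "p < dS * dE" and q: "q < dS * dE"
    and phi: "phi < dS"
  shows "(U * tensor_mat (proj (ket dS phi)) ((1 / of_nat dE) \<cdot>\<^sub>m 1\<^sub>m dE) * adj U) $$ (p,q)
     = complex_of_real (1 / real dE) * (\<Sum>j<dE. U $$ (p, phi * dE + j) * cnj (U $$ (q, phi * dE + j)))"
proof -
  define N where "N = dS * dE"
  define \<rho> where "\<rho> = tensor_mat (proj (ket dS phi)) ((1 / of_nat dE) \<cdot>\<^sub>m 1\<^sub>m dE)"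
  define c where "c = complex_of_real (1 / real dE)"
  have dE: "0 < dE" using p by (metis mult_0_right not_less_zero neq0_conv)
  have rho: "\<rho> \<in> carrier_mat N N" unfolding \<rho>_def N_def by (rule rho_carrier)
  have U': "U \<in> carrier_mat N N" using U unfolding N_def .
  have Ur: "U * \<rho> \<in> carrier_mat N N" using U' rho by simp
  have pN: "p < N" "q < N" using p q unfolding N_def by auto
  have aU: "adj U \<in> carrier_mat N N" using U' by simp
  have Ure: "\<And>b. b < N \<Longrightarrow> (U * \<rho>) $$ (p,b) = U $$ (p,b) * (if b div dE = phi then c else 0)"
  proof -
    fix b assume b: "b < N"
    have "(U * \<rho>) $$ (p,b) = (\<Sum>a<N. U $$ (p,a) * \<rho> $$ (a,b))"
      by (rule mme[OF U' rho pN(1) b])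
    also have "\<dots> = (\<Sum>a<N. if a = b then U $$ (p,b) * (if b div dE = phi then c else 0) else 0)"
      by (intro sum.cong refl) (use b in \<open>auto simp: \<rho>_def c_def rho_entry[OF _ _ phi] N_def\<close>)
    also have "\<dots> = U $$ (p,b) * (if b div dE = phi then c else 0)" using b by simp
    finally show "(U * \<rho>) $$ (p,b) = U $$ (p,b) * (if b div dE = phi then c else 0)" .
  qed
  have "(U * \<rho> * adj U) $$ (p,q) = (\<Sum>b<N. (U * \<rho>) $$ (p,b) * adj U $$ (b,q))"
    by (rule mme[OF Ur aU pN])
  also have "\<dots> = (\<Sum>b<N. U $$ (p,b) * (if b div dE = phi then c else 0) * cnj (U $$ (q,b)))"
    by (intro sum.cong refl) (use U' q Ure in \<open>auto simp: N_def\<close>)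
  also have "\<dots> = (\<Sum>i<dS. \<Sum>l<dE. U $$ (p,i * dE + l) * (if i = phi then c else 0) * cnj (U $$ (q,i * dE + l)))"
    unfolding N_def sum_split_mult by (intro sum.cong refl) (use dE in simp)
  also have "\<dots> = (\<Sum>i<dS. if i = phi then (\<Sum>l<dE. c * (U $$ (p,phi * dE + l) * cnj (U $$ (q,phi * dE + l)))) else 0)"
    by (intro sum.cong refl) (auto simp: algebra_simps)
  also have "\<dots> = c * (\<Sum>j<dE. U $$ (p, phi * dE + j) * cnj (U $$ (q, phi * dE + j)))"
    using phi by (simp add: sum_distrib_left)
  finally show ?thesis unfolding \<rho>_def c_def .
qed

lemma idx_lt: fixes i l dS dE :: nat assumes "i < dS" "l < dE" shows "i * dE + l < dS * dE"
proof -
  have "i * dE + l < Suc i * dE" using assms by simp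
  also have "\<dots> \<le> dS * dE" using assms by (intro mult_le_mono1) simp
  finally show ?thesis .
qed

lemma ptrace_tau: assumes U: "U \<in> carrier_mat (dS * dE) (dS * dE)" and phi: "phi < dS"
  shows "ptrace_E dS dE (U * tensor_mat (proj (ket dS phi)) ((1 / of_nat dE) \<cdot>\<^sub>m 1\<^sub>m dE) * adj U)
    = tau_of dS ({..<dE} \<times> {..<dE}) (\<lambda>(j,l) i. U $$ (i * dE + l, phi * dE + j) * complex_of_real (1 / sqrt (real dE)))"
proof (rule eq_matI)
  fix i i' assume "i < dim_row (tau_of dS ({..<dE} \<times> {..<dE}) (\<lambda>(j,l) i. U $$ (i * dE + l, phi * dE + j) * complex_of_real (1 / sqrt (real dE))))"
    "i' < dim_col (tau_of dS ({..<dE} \<times> {..<dE}) (\<lambda>(j,l) i. U $$ (i * dE + l, phi * dE + j) * complex_of_real (1 / sqrt (real dE))))"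
  hence ii: "i < dS" "i' < dS" by (auto simp: tau_of_def)
  define s where "s = complex_of_real (1 / sqrt (real dE))"
  have ss: "s * cnj s = complex_of_real (1 / real dE)" unfolding s_def
    by (simp flip: of_real_mult)
  have "ptrace_E dS dE (U * tensor_mat (proj (ket dS phi)) ((1 / of_nat dE) \<cdot>\<^sub>m 1\<^sub>m dE) * adj U) $$ (i,i')
     = (\<Sum>l<dE. complex_of_real (1 / real dE) * (\<Sum>j<dE. U $$ (i * dE + l, phi * dE + j) * cnj (U $$ (i' * dE + l, phi * dE + j))))"
    using ii by (simp add: ptrace_E_def M_entry[OF U idx_lt idx_lt phi])
  also have "\<dots> = (\<Sum>l<dE. \<Sum>j<dE. (s * cnj s) * (U $$ (i * dE + l, phi * dE + j) * cnj (U $$ (i' * dE + l, phi * dE + j))))"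
    by (simp only: ss sum_distrib_left)
  also have "\<dots> = (\<Sum>l<dE. \<Sum>j<dE. (U $$ (i * dE + l, phi * dE + j) * s) * cnj (U $$ (i' * dE + l, phi * dE + j) * s))"
    by (simp add: algebra_simps)
  also have "\<dots> = (\<Sum>j<dE. \<Sum>l<dE. (U $$ (i * dE + l, phi * dE + j) * s) * cnj (U $$ (i' * dE + l, phi * dE + j) * s))"
    by (rule sum.swap)
  also have "\<dots> = tau_of dS ({..<dE} \<times> {..<dE}) (\<lambda>(j,l) i. U $$ (i * dE + l, phi * dE + j) * s) $$ (i,i')"
    using ii by (simp add: tau_of_def sum.cartesian_product case_prod_beta)
  finally show "ptrace_E dS dE (U * tensor_mat (proj (ket dS phi)) ((1 / of_nat dE) \<cdot>\<^sub>m 1\<^sub>m dE) * adj U) $$ (i,i')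
     = tau_of dS ({..<dE} \<times> {..<dE}) (\<lambda>(j,l) i. U $$ (i * dE + l, phi * dE + j) * complex_of_real (1 / sqrt (real dE))) $$ (i,i')"
    unfolding s_def .
qed (auto simp: ptrace_E_def tau_of_def)



lemma sum_prod_split: "(\<Sum>r\<in>A \<times> B. F r) = (\<Sum>x\<in>A. \<Sum>y\<in>B. F (x,y))"
  by (simp add: sum.cartesian_product)

theorem lemma2:
  fixes dS dE :: nat and H :: "complex mat" and Ev :: "nat \<Rightarrow> complex vec"
    and E :: "nat \<Rightarrow> real" and phi :: nat
  assumes dS: "0 < dS" and dE: "0 < dE"
    and H: "H \<in> carrier_mat (dS * dE) (dS * dE)" and herm: "adj H = H"
    and Ev_dim: "\<forall>k < dS * dE. Ev k \<in> carrier_vec (dS * dE)"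
    and Ev_orth: "\<forall>k < dS * dE. \<forall>l < dS * dE. cinner (Ev k) (Ev l) = (if k = l then 1 else 0)"
    and Ev_eig: "\<forall>k < dS * dE. H *\<^sub>v Ev k = complex_of_real (E k) \<cdot>\<^sub>v Ev k"
    and phi: "phi < dS"
    and big: "delta dS dE Ev phi > 1 / sqrt 2"
  shows "\<forall>t :: real.
    trace_norm (ptrace_E dS dE
        (mat_exp ((- (\<i> * complex_of_real t)) \<cdot>\<^sub>m H)
         * tensor_mat (proj (ket dS phi)) ((1 / of_nat dE) \<cdot>\<^sub>m 1\<^sub>m dE)
         * adj (mat_exp ((- (\<i> * complex_of_real t)) \<cdot>\<^sub>m H)))
      - proj (ket dS phi))
    \<le> 4 * delta dS dE Ev phi * sqrt (1 - (delta dS dE Ev phi)\<^sup>2)"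
proof (intro allI)
  fix t :: real
  define N where "N = dS * dE"
  have u: "onb N Ev" unfolding onb_def N_def using Ev_dim Ev_orth by simp
  have Hs: "H = cspec N Ev (\<lambda>k. complex_of_real (E k))"
    using spec_expand[OF u, of H E] H Ev_eig unfolding N_def specmat_cspec by simp
  define c where "c = - (\<i> * complex_of_real t)"
  define \<zeta> where "\<zeta> k = exp (c * complex_of_real (E k))" for k
  define U where "U = cspec N Ev \<zeta>"
  have Ueq: "mat_exp (c \<cdot>\<^sub>m H) = U"
    unfolding Hs cspec_smult mat_exp_cspec[OF u] U_def \<zeta>_def ..
  have Uc: "U \<in> carrier_mat N N" unfolding U_def by simp
  have z1: "\<And>k. cmod (\<zeta> k) = 1" unfolding \<zeta>_def c_def by (simp add: norm_exp_eq_Re)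
  have zz: "\<And>k. cnj (\<zeta> k) * \<zeta> k = 1"
  proof -
    fix k
    have "cnj (\<zeta> k) * \<zeta> k = complex_of_real ((cmod (\<zeta> k))\<^sup>2)" unfolding complex_norm_square by (rule mult.commute)
    thus "cnj (\<zeta> k) * \<zeta> k = 1" using z1[of k] by simp
  qed
  have UU: "adj U * U = 1\<^sub>m N"
    unfolding U_def cspec_adj cspec_mult[OF u] zz cspec_one[OF u] ..
  have colnorm: "\<And>q. q < N \<Longrightarrow> (\<Sum>p<N. (cmod (U $$ (p,q)))\<^sup>2) = 1"
  proof -
    fix q assume q: "q < N"
    have "(adj U * U) $$ (q,q) = (\<Sum>p<N. cnj (U $$ (p,q)) * U $$ (p,q))"
      using q Uc by (subst mme[of _ N N _ N]) auto
    also have "\<dots> = complex_of_real (\<Sum>p<N. (cmod (U $$ (p,q)))\<^sup>2)"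
      unfolding of_real_sum by (intro sum.cong refl) (simp only: complex_norm_square mult.commute)
    finally have "complex_of_real (\<Sum>p<N. (cmod (U $$ (p,q)))\<^sup>2) = 1" using UU q by simp
    thus "(\<Sum>p<N. (cmod (U $$ (p,q)))\<^sup>2) = 1" by (simp only: of_real_eq_1_iff)
  qed
  define b where "b = (\<lambda>(j,l) i. U $$ (i * dE + l, phi * dE + j) * complex_of_real (1 / sqrt (real dE)))"
  define R where "R = {..<dE} \<times> {..<dE}"
  have Uc': "U \<in> carrier_mat (dS * dE) (dS * dE)" using Uc unfolding N_def .
  have tau: "ptrace_E dS dE
        (mat_exp ((- (\<i> * complex_of_real t)) \<cdot>\<^sub>m H)
         * tensor_mat (proj (ket dS phi)) ((1 / of_nat dE) \<cdot>\<^sub>m 1\<^sub>m dE)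
         * adj (mat_exp ((- (\<i> * complex_of_real t)) \<cdot>\<^sub>m H))) = tau_of dS R b"
    unfolding c_def[symmetric] Ueq R_def b_def by (rule ptrace_tau[OF Uc' phi])
  have bsq: "\<And>j l i. (cmod (b (j,l) i))\<^sup>2 = (cmod (U $$ (i * dE + l, phi * dE + j)))\<^sup>2 / real dE"
    unfolding b_def using dE by (simp add: norm_divide power_divide)
  have nb: "(\<Sum>r\<in>R. \<Sum>i<dS. (cmod (b r i))\<^sup>2) = 1"
  proof -
    have "(\<Sum>r\<in>R. \<Sum>i<dS. (cmod (b r i))\<^sup>2) = (\<Sum>j<dE. \<Sum>l<dE. \<Sum>i<dS. (cmod (U $$ (i * dE + l, phi * dE + j)))\<^sup>2 / real dE)"
      unfolding R_def sum_prod_split by (simp add: bsq)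
    also have "\<dots> = (\<Sum>j<dE. (\<Sum>i<dS. \<Sum>l<dE. (cmod (U $$ (i * dE + l, phi * dE + j)))\<^sup>2) / real dE)"
      by (intro sum.cong refl) (simp add: sum_divide_distrib[symmetric] sum.swap[of _ "{..<dE}"])
    also have "\<dots> = (\<Sum>j<dE. 1 / real dE)"
    proof (intro sum.cong refl)
      fix j assume "j \<in> {..<dE}"
      hence "phi * dE + j < N" unfolding N_def using idx_lt[OF phi] by simp
      thus "(\<Sum>i<dS. \<Sum>l<dE. (cmod (U $$ (i * dE + l, phi * dE + j)))\<^sup>2) / real dE = 1 / real dE"
        using colnorm[of "phi * dE + j"] unfolding N_def sum_split_mult by simp
    qed
    also have "\<dots> = 1" using dE by simp
    finally show ?thesis .
  qed
  define a0 where "a0 = (\<Sum>r\<in>R. (cmod (b r phi))\<^sup>2)"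
  have tn: "trace_norm (tau_of dS R b - proj (ket dS phi)) \<le> 2 * sqrt (1 - a0)"
    unfolding a0_def by (rule tn_main) (use phi nb in \<open>auto simp: R_def\<close>)
  define dl where "dl = delta dS dE Ev phi"
  have dpos: "dl > 0" using big unfolding dl_def by (smt (verit) divide_pos_pos real_sqrt_gt_zero)
  have dsq: "dl\<^sup>2 > 1/2"
  proof -
    have "(1 / sqrt 2)\<^sup>2 < dl\<^sup>2" using big unfolding dl_def[symmetric]
      by (intro power_strict_mono) auto
    thus ?thesis by (simp add: power_divide)
  qed
  have diagj: "\<And>j. j < dE \<Longrightarrow> (cmod (U $$ (phi * dE + j, phi * dE + j)))\<^sup>2 \<ge> 1 - 4 * dl\<^sup>2 * (1 - dl\<^sup>2)"
  proof -
    fix j assume j: "j < dE"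
    define p where "p = phi * dE + j"
    have p: "p < N" unfolding p_def N_def using idx_lt[OF phi j] .
    define w where "w k = (cmod (Ev k $ p))\<^sup>2" for k
    have Upp: "U $$ (p,p) = (\<Sum>k<N. \<zeta> k * complex_of_real (w k))"
      unfolding U_def w_def using p by (simp add: cspec_def complex_norm_square del: of_real_power)
    have w1: "(\<Sum>k<N. w k) = 1"
    proof -
      have "(\<Sum>k<N. Ev k $ p * cnj (Ev k $ p)) = 1" using onb_complete[OF u p p] by simp
      hence "complex_of_real (\<Sum>k<N. w k) = 1" unfolding w_def of_real_sum by (simp only: complex_norm_square)
      thus ?thesis by (simp only: of_real_eq_1_iff)
    qed
    obtain k0 where k0: "k0 < N" and dk: "dl \<le> cmod (Ev k0 $ p)"
      using delta_witness[OF dS dE phi, of Ev] j unfolding dl_def p_def N_def by blast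
    have wk0: "w k0 \<ge> dl\<^sup>2" unfolding w_def using dk dpos by (simp add: power_mono)
    show "(cmod (U $$ (phi * dE + j, phi * dE + j)))\<^sup>2 \<ge> 1 - 4 * dl\<^sup>2 * (1 - dl\<^sup>2)"
      unfolding p_def[symmetric] Upp
      by (rule diag_bound[of "{..<N}" k0]) (use k0 w1 z1 wk0 dsq in \<open>auto simp: w_def\<close>)
  qed
  have a0ge: "a0 \<ge> 1 - 4 * dl\<^sup>2 * (1 - dl\<^sup>2)"
  proof -
    have "1 - 4 * dl\<^sup>2 * (1 - dl\<^sup>2) = (\<Sum>j<dE. (1 - 4 * dl\<^sup>2 * (1 - dl\<^sup>2)) / real dE)" using dE by simp
    also have "\<dots> \<le> (\<Sum>j<dE. (cmod (U $$ (phi * dE + j, phi * dE + j)))\<^sup>2 / real dE)"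
      by (intro sum_mono divide_right_mono diagj) auto
    also have "\<dots> \<le> (\<Sum>j<dE. \<Sum>l<dE. (cmod (U $$ (phi * dE + l, phi * dE + j)))\<^sup>2 / real dE)"
      by (intro sum_mono member_le_sum) auto
    also have "\<dots> = a0"
      unfolding a0_def R_def sum_prod_split by (simp add: bsq)
    finally show ?thesis .
  qed
  have "2 * sqrt (1 - a0) \<le> 2 * sqrt (4 * dl\<^sup>2 * (1 - dl\<^sup>2))" using a0ge by simp
  also have "sqrt (4 * dl\<^sup>2 * (1 - dl\<^sup>2)) = 2 * dl * sqrt (1 - dl\<^sup>2)"
    using dpos by (simp add: real_sqrt_mult)
  finally show "trace_norm (ptrace_E dS dE
        (mat_exp ((- (\<i> * complex_of_real t)) \<cdot>\<^sub>m H)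
         * tensor_mat (proj (ket dS phi)) ((1 / of_nat dE) \<cdot>\<^sub>m 1\<^sub>m dE)
         * adj (mat_exp ((- (\<i> * complex_of_real t)) \<cdot>\<^sub>m H)))
      - proj (ket dS phi))
    \<le> 4 * delta dS dE Ev phi * sqrt (1 - (delta dS dE Ev phi)\<^sup>2)"
    unfolding tau using tn unfolding dl_def by simp
qed


end
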